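(* In symmetric private information retrieval with $N=2$ databases and $K=3$ messages of length $L=1$, with upload cost $U=4$, the optimal total communication cost $U+D$ is $4+2=6$, and the minimal amount of required common randomness is $H(\mathcal{R})=1$.
   Context: SPIR setting: each of $N$ non-colluding databases stores the same $K$ i.i.d. messages $W_1,\dots,W_K$, each consisting of $L$ i.i.d. uniform symbols from a sufficiently large finite field $\mathbb{F}_q$ (entropies in $q$-ary units, $H(W_k)=L$). The user wants $W_k$ with private randomness $\mathcal{F}$; the databases share common randomness $\mathcal{R}$, with $I(W_{1:K};k,\mathcal{F},\mathcal{R})=0$. Queries $Q_n^{[k]}$ are deterministic functions of $\mathcal{F}$; answers satisfy $H(A_n^{[k]}\mid Q_n^{[k]},W_{1:K},\mathcal{R})=0$. Achievability requires reliability $H(W_k\mid\mathcal{F},A_{1:N}^{[k]})=0$; user privacy: for all $n$ and $k'\neq k$, $(Q_n^{[k]},A_n^{[k]},W_{1:K},\mathcal{R})\sim(Q_n^{[k']},A_n^{[k']},W_{1:K},\mathcal{R})$; database privacy $I(W_{\bar k};\mathcal{F},A_{1:N}^{[k]})=0$ with $W_{\bar k}=\{W_j:j\neq k\}$. Upload cost $U$: total number of bits sent from user to databases ($U=4$ when each of the two queries takes one of 4 values). Download cost $D$: total size of the answers (in the same units as $L$). Total communication cost is $U+D$. *)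

theory Defs
  imports "HOL-Probability.Probability" "HOL-Library.Numeral_Type"
begin

definition pmf_ent :: "real \<Rightarrow> 'b pmf \<Rightarrow> real" where
  "pmf_ent b p = - (\<Sum>x\<in>set_pmf p. pmf p x * log b (pmf p x))"

definition rv_ent :: "real \<Rightarrow> 'o pmf \<Rightarrow> ('o \<Rightarrow> 'b) \<Rightarrow> real" where
  "rv_ent b M X = pmf_ent b (map_pmf X M)"

definition cond_ent :: "real \<Rightarrow> 'o pmf \<Rightarrow> ('o \<Rightarrow> 'b) \<Rightarrow> ('o \<Rightarrow> 'c) \<Rightarrow> real" where
  "cond_ent b M X Y = rv_ent b M (\<lambda>\<omega>. (X \<omega>, Y \<omega>)) - rv_ent b M Y"

definition mut_info :: "real \<Rightarrow> 'o pmf \<Rightarrow> ('o \<Rightarrow> 'b) \<Rightarrow> ('o \<Rightarrow> 'c) \<Rightarrow> real" where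
  "mut_info b M X Y = rv_ent b M X + rv_ent b M Y - rv_ent b M (\<lambda>\<omega>. (X \<omega>, Y \<omega>))"

text \<open>Sample point: (W, F, R) with W : 3 \<Rightarrow> 'f the three messages (one symbol each),
  F the user's private randomness, R the databases' common randomness (both encoded in nat).
  Queries Q n k F (database n, desired message k); answers Ans n q W R.\<close>

type_synonym 'f sample = "(3 \<Rightarrow> 'f) \<times> nat \<times> nat"

definition joint :: "nat pmf \<Rightarrow> nat pmf \<Rightarrow> ('f::finite) sample pmf" where
  "joint pF pR = pair_pmf (pmf_of_set UNIV) (pair_pmf pF pR)"

definition msg_rv :: "3 \<Rightarrow> 'f sample \<Rightarrow> 'f" where
  "msg_rv k = (\<lambda>(w, f, r). w k)"

definition others_rv :: "3 \<Rightarrow> 'f sample \<Rightarrow> (3 \<Rightarrow> 'f option)" where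
  "others_rv k = (\<lambda>(w, f, r). (\<lambda>j. if j = k then None else Some (w j)))"

definition user_rv :: "'f sample \<Rightarrow> nat" where
  "user_rv = (\<lambda>(w, f, r). f)"

definition query_rv :: "(2 \<Rightarrow> 3 \<Rightarrow> nat \<Rightarrow> nat) \<Rightarrow> 2 \<Rightarrow> 3 \<Rightarrow> 'f sample \<Rightarrow> nat" where
  "query_rv Q n k = (\<lambda>(w, f, r). Q n k f)"

definition ans_rv :: "(2 \<Rightarrow> 3 \<Rightarrow> nat \<Rightarrow> nat) \<Rightarrow> (2 \<Rightarrow> nat \<Rightarrow> (3 \<Rightarrow> 'f) \<Rightarrow> nat \<Rightarrow> nat)
    \<Rightarrow> 2 \<Rightarrow> 3 \<Rightarrow> 'f sample \<Rightarrow> nat" where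
  "ans_rv Q Ans n k = (\<lambda>(w, f, r). Ans n (Q n k f) w r)"

definition qbase :: "'f itself \<Rightarrow> real" where
  "qbase _ = real CARD('f)"

definition spir_scheme ::
  "nat pmf \<Rightarrow> nat pmf \<Rightarrow> (2 \<Rightarrow> 3 \<Rightarrow> nat \<Rightarrow> nat) \<Rightarrow> (2 \<Rightarrow> nat \<Rightarrow> (3 \<Rightarrow> 'f::finite) \<Rightarrow> nat \<Rightarrow> nat) \<Rightarrow> bool"
where
  "spir_scheme pF pR Q Ans \<longleftrightarrow>
     finite (set_pmf pF) \<and> finite (set_pmf pR) \<and>
     \<comment> \<open>reliability: H(W_k | F, A_{1:N}) = 0\<close>
     (\<forall>k. cond_ent (qbase TYPE('f)) (joint pF pR) (msg_rv k)
            (\<lambda>\<omega>. (user_rv \<omega>, \<lambda>n. ans_rv Q Ans n k \<omega>)) = 0) \<and>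
     \<comment> \<open>user privacy: (Q_n, A_n, W, R) identically distributed for all k\<close>
     (\<forall>n k k'. map_pmf (\<lambda>\<omega>. (query_rv Q n k \<omega>, ans_rv Q Ans n k \<omega>, fst \<omega>, snd (snd \<omega>))) (joint pF pR)
             = map_pmf (\<lambda>\<omega>. (query_rv Q n k' \<omega>, ans_rv Q Ans n k' \<omega>, fst \<omega>, snd (snd \<omega>))) (joint pF pR)) \<and>
     \<comment> \<open>database privacy: I(W_kbar; F, A_{1:N}) = 0\<close>
     (\<forall>k. mut_info (qbase TYPE('f)) (joint pF pR) (others_rv k)
            (\<lambda>\<omega>. (user_rv \<omega>, \<lambda>n. ans_rv Q Ans n k \<omega>)) = 0)"

definition upload :: "nat pmf \<Rightarrow> (2 \<Rightarrow> 3 \<Rightarrow> nat \<Rightarrow> nat) \<Rightarrow> real" where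
  "upload pF Q = (\<Sum>n\<in>UNIV. log 2 (real (card (\<Union>k. Q n k ` set_pmf pF))))"

definition download :: "nat pmf \<Rightarrow> nat pmf \<Rightarrow> (2 \<Rightarrow> 3 \<Rightarrow> nat \<Rightarrow> nat)
    \<Rightarrow> (2 \<Rightarrow> nat \<Rightarrow> (3 \<Rightarrow> 'f::finite) \<Rightarrow> nat \<Rightarrow> nat) \<Rightarrow> real" where
  "download pF pR Q Ans = (\<Sum>n\<in>UNIV. log (qbase TYPE('f))
       (real (card (\<Union>k. ans_rv Q Ans n k ` set_pmf (joint pF pR)))))"

definition cr_amount :: "'f itself \<Rightarrow> nat pmf \<Rightarrow> real" where
  "cr_amount t pR = pmf_ent (qbase t) pR"

end

theory Submission
  imports Defs
begin


lemma pmf_map_fiber: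
  assumes "finite A" "set_pmf p \<subseteq> A"
  shows "pmf (map_pmf f p) y = (\<Sum>a\<in>{a\<in>A. f a = y}. pmf p a)"
proof -
  have "pmf (map_pmf f p) y = measure_pmf.prob p (f -` {y})" by (simp add: pmf_map)
  also have "\<dots> = measure_pmf.prob p (f -` {y} \<inter> set_pmf p)" by (simp add: measure_Int_set_pmf)
  also have "f -` {y} \<inter> set_pmf p = {a\<in>A. f a = y} \<inter> set_pmf p" using assms by auto
  also have "measure_pmf.prob p \<dots> = measure_pmf.prob p {a\<in>A. f a = y}" by (simp add: measure_Int_set_pmf)
  also have "\<dots> = (\<Sum>a\<in>{a\<in>A. f a = y}. pmf p a)" using assms by (simp add: measure_measure_pmf_finite)
  finally show ?thesis .
qed

lemma pmf_map_ge:
  assumes "\<omega> \<in> set_pmf M"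
  shows "pmf M \<omega> \<le> pmf (map_pmf X M) (X \<omega>)" and "0 < pmf (map_pmf X M) (X \<omega>)"
proof -
  have "pmf M \<omega> = measure_pmf.prob M {\<omega>}" by (simp add: measure_pmf_single)
  also have "\<dots> \<le> measure_pmf.prob M (X -` {X \<omega>})" by (rule measure_pmf.finite_measure_mono) auto
  finally show 1: "pmf M \<omega> \<le> pmf (map_pmf X M) (X \<omega>)" by (simp add: pmf_map)
  have "0 < pmf M \<omega>" using assms by (simp add: pmf_positive)
  with 1 show "0 < pmf (map_pmf X M) (X \<omega>)" by linarith
qed

lemma group_sum:
  assumes fin: "finite (set_pmf M)"
  shows "(\<Sum>\<omega>\<in>set_pmf M. pmf M \<omega> * g (V \<omega>)) = (\<Sum>v\<in>V ` set_pmf M. pmf (map_pmf V M) v * g v)"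
proof -
  have "(\<Sum>\<omega>\<in>set_pmf M. pmf M \<omega> * g (V \<omega>)) =
     (\<Sum>v\<in>V ` set_pmf M. \<Sum>\<omega>\<in>{\<omega>\<in>set_pmf M. V \<omega> = v}. pmf M \<omega> * g (V \<omega>))"
    using fin by (rule sum.image_gen)
  also have "\<dots> = (\<Sum>v\<in>V ` set_pmf M. \<Sum>\<omega>\<in>{\<omega>\<in>set_pmf M. V \<omega> = v}. pmf M \<omega> * g v)"
    by (intro sum.cong refl) auto
  also have "\<dots> = (\<Sum>v\<in>V ` set_pmf M. pmf (map_pmf V M) v * g v)"
    by (intro sum.cong refl) (simp add: pmf_map_fiber[OF fin order_refl] sum_distrib_right)
  finally show ?thesis .
qed

lemma sum_pmf_S: "finite (set_pmf M) \<Longrightarrow> (\<Sum>\<omega>\<in>set_pmf M. pmf M \<omega>) = 1"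
  by (simp add: sum_pmf_eq_1)

lemma ent_pointwise:
  assumes fin: "finite (set_pmf M)"
  shows "rv_ent b M X = - (\<Sum>\<omega>\<in>set_pmf M. pmf M \<omega> * log b (pmf (map_pmf X M) (X \<omega>)))"
  unfolding rv_ent_def pmf_ent_def
  by (subst group_sum[OF fin]) simp

lemma pmf_ent_inj:
  assumes "inj_on g (set_pmf p)"
  shows "pmf_ent b (map_pmf g p) = pmf_ent b p"
  unfolding pmf_ent_def using assms
  by (simp add: sum.reindex pmf_map_inj)

lemma ent_cong:
  "(\<And>\<omega>. \<omega> \<in> set_pmf M \<Longrightarrow> X \<omega> = Y \<omega>) \<Longrightarrow> rv_ent b M X = rv_ent b M Y"
  unfolding rv_ent_def by (simp cong: map_pmf_cong)

lemma ent_inj: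
  assumes "inj_on g (X ` set_pmf M)"
  shows "rv_ent b M (\<lambda>\<omega>. g (X \<omega>)) = rv_ent b M X"
proof -
  have "map_pmf (\<lambda>\<omega>. g (X \<omega>)) M = map_pmf g (map_pmf X M)" by (simp add: map_pmf_comp)
  then show ?thesis unfolding rv_ent_def using assms by (simp add: pmf_ent_inj)
qed

lemma ent_eq_part:
  assumes "\<And>x y. x \<in> set_pmf M \<Longrightarrow> y \<in> set_pmf M \<Longrightarrow> X x = X y \<longleftrightarrow> Y x = Y y"
  shows "rv_ent b M X = rv_ent b M Y"
proof -
  define g where "g a = Y (SOME \<omega>. \<omega> \<in> set_pmf M \<and> X \<omega> = a)" for a
  have gY: "g (X \<omega>) = Y \<omega>" if "\<omega> \<in> set_pmf M" for \<omega>
  proof -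
    have "\<exists>\<omega>'. \<omega>' \<in> set_pmf M \<and> X \<omega>' = X \<omega>" using that by blast
    then have "(SOME \<omega>'. \<omega>' \<in> set_pmf M \<and> X \<omega>' = X \<omega>) \<in> set_pmf M \<and> X (SOME \<omega>'. \<omega>' \<in> set_pmf M \<and> X \<omega>' = X \<omega>) = X \<omega>"
      by (rule someI_ex)
    then show ?thesis unfolding g_def using assms that by blast
  qed
  have inj: "inj_on g (X ` set_pmf M)"
    by (auto simp: inj_on_def gY assms)
  have "rv_ent b M Y = rv_ent b M (\<lambda>\<omega>. g (X \<omega>))" by (rule ent_cong) (simp add: gY)
  also have "\<dots> = rv_ent b M X" by (rule ent_inj[OF inj])
  finally show ?thesis by simp
qed

lemma ent_const: "rv_ent b M (\<lambda>\<omega>. c) = 0"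
  unfolding rv_ent_def pmf_ent_def by (simp add: map_pmf_const)

lemma gibbs:
  fixes b :: real
  assumes b: "1 < b" and fin: "finite S" and p: "\<And>x. x \<in> S \<Longrightarrow> 0 \<le> p x" and sp: "sum p S = 1"
    and r: "\<And>x. x \<in> S \<Longrightarrow> 0 < r x" and spr: "(\<Sum>x\<in>S. p x * r x) \<le> 1"
  shows "(\<Sum>x\<in>S. p x * log b (r x)) \<le> 0"
proof -
  have lb: "0 < ln b" using b by simp
  have "(\<Sum>x\<in>S. p x * log b (r x)) \<le> (\<Sum>x\<in>S. p x * ((r x - 1) / ln b))"
  proof (intro sum_mono mult_left_mono p)
    fix x assume x: "x \<in> S"
    have "ln (r x) \<le> r x - 1" using r[OF x] by (rule ln_le_minus_one)
    then show "log b (r x) \<le> (r x - 1) / ln b" unfolding log_def using lb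
      by (simp add: divide_right_mono)
  qed
  also have "\<dots> = ((\<Sum>x\<in>S. p x * r x) - sum p S) / ln b"
    by (simp add: sum_divide_distrib[symmetric] right_diff_distrib sum_subtractf)
  also have "\<dots> \<le> 0" using spr sp lb by (simp add: divide_nonpos_pos)
  finally show ?thesis .
qed

lemma ent_nonneg:
  assumes b: "1 < b" and fin: "finite (set_pmf M)"
  shows "0 \<le> rv_ent b M X"
proof -
  have "(\<Sum>\<omega>\<in>set_pmf M. pmf M \<omega> * log b (pmf (map_pmf X M) (X \<omega>))) \<le> 0"
  proof (intro sum_nonpos mult_nonneg_nonpos pmf_nonneg)
    fix \<omega> assume "\<omega> \<in> set_pmf M"
    then have "0 < pmf (map_pmf X M) (X \<omega>)" by (rule pmf_map_ge)
    then show "log b (pmf (map_pmf X M) (X \<omega>)) \<le> 0" using b pmf_le_1 by simp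
  qed
  then show ?thesis by (simp add: ent_pointwise[OF fin])
qed

lemma ent_le_pair:
  assumes b: "1 < b" and fin: "finite (set_pmf M)"
  shows "rv_ent b M Y \<le> rv_ent b M (\<lambda>\<omega>. (X \<omega>, Y \<omega>))"
proof -
  have "(\<Sum>\<omega>\<in>set_pmf M. pmf M \<omega> * log b (pmf (map_pmf (\<lambda>\<omega>. (X \<omega>, Y \<omega>)) M) (X \<omega>, Y \<omega>)))
     \<le> (\<Sum>\<omega>\<in>set_pmf M. pmf M \<omega> * log b (pmf (map_pmf Y M) (Y \<omega>)))"
  proof (intro sum_mono mult_left_mono pmf_nonneg)
    fix \<omega> assume w: "\<omega> \<in> set_pmf M"
    have p: "0 < pmf (map_pmf (\<lambda>\<omega>. (X \<omega>, Y \<omega>)) M) (X \<omega>, Y \<omega>)"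
      using pmf_map_ge(2)[OF w, of "\<lambda>\<omega>. (X \<omega>, Y \<omega>)"] by simp
    have "measure_pmf.prob M ((\<lambda>\<omega>. (X \<omega>, Y \<omega>)) -` {(X \<omega>, Y \<omega>)}) \<le> measure_pmf.prob M (Y -` {Y \<omega>})"
      by (rule measure_pmf.finite_measure_mono) auto
    then have "pmf (map_pmf (\<lambda>\<omega>. (X \<omega>, Y \<omega>)) M) (X \<omega>, Y \<omega>) \<le> pmf (map_pmf Y M) (Y \<omega>)"
      by (simp add: pmf_map)
    then show "log b (pmf (map_pmf (\<lambda>\<omega>. (X \<omega>, Y \<omega>)) M) (X \<omega>, Y \<omega>)) \<le> log b (pmf (map_pmf Y M) (Y \<omega>))"
      using p b by simp
  qed
  then show ?thesis by (simp add: ent_pointwise[OF fin])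
qed

lemma ent_mono_part:
  assumes b: "1 < b" and fin: "finite (set_pmf M)"
    and h: "\<And>x y. x \<in> set_pmf M \<Longrightarrow> y \<in> set_pmf M \<Longrightarrow> X x = X y \<Longrightarrow> Y x = Y y"
  shows "rv_ent b M Y \<le> rv_ent b M X"
proof -
  have "rv_ent b M Y \<le> rv_ent b M (\<lambda>\<omega>. (X \<omega>, Y \<omega>))" by (rule ent_le_pair[OF b fin])
  also have "\<dots> = rv_ent b M X" by (rule ent_eq_part) (auto dest: h)
  finally show ?thesis .
qed

lemma ent_le_card:
  assumes b: "1 < b" and fin: "finite (set_pmf M)"
  shows "rv_ent b M X \<le> log b (card (X ` set_pmf M))"
proof -
  let ?S = "set_pmf M"
  let ?n = "real (card (X ` ?S))"
  let ?P = "\<lambda>\<omega>. pmf (map_pmf X M) (X \<omega>)"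
  have ne: "?S \<noteq> {}" by (rule set_pmf_not_empty)
  then have n: "0 < ?n" using fin by (simp add: card_gt_0_iff)
  have "(\<Sum>\<omega>\<in>?S. pmf M \<omega> * log b (1 / (?n * ?P \<omega>))) \<le> 0"
  proof (rule gibbs[OF b fin])
    show "sum (pmf M) ?S = 1" using fin by (rule sum_pmf_S)
    show "0 < 1 / (?n * ?P \<omega>)" if "\<omega> \<in> ?S" for \<omega> using pmf_map_ge(2)[OF that, of X] n by simp
    have "(\<Sum>\<omega>\<in>?S. pmf M \<omega> * (1 / (?n * ?P \<omega>))) = (\<Sum>v\<in>X ` ?S. pmf (map_pmf X M) v * (1 / (?n * pmf (map_pmf X M) v)))"
      by (rule group_sum[OF fin])
    also have "\<dots> = (\<Sum>v\<in>X ` ?S. 1 / ?n)"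
    proof (rule sum.cong[OF refl])
      fix v assume "v \<in> X ` ?S"
      then obtain \<omega> where "\<omega> \<in> ?S" "v = X \<omega>" by auto
      then have "0 < pmf (map_pmf X M) v" using pmf_map_ge(2) by simp
      then show "pmf (map_pmf X M) v * (1 / (?n * pmf (map_pmf X M) v)) = 1 / ?n" by simp
    qed
    also have "\<dots> = 1" using n by simp
    finally show "(\<Sum>\<omega>\<in>?S. pmf M \<omega> * (1 / (?n * ?P \<omega>))) \<le> 1" by simp
  qed simp
  also have "(\<Sum>\<omega>\<in>?S. pmf M \<omega> * log b (1 / (?n * ?P \<omega>))) =
      (\<Sum>\<omega>\<in>?S. - (pmf M \<omega> * log b (?P \<omega>)) - pmf M \<omega> * log b ?n)"
  proof (rule sum.cong[OF refl])
    fix \<omega> assume w: "\<omega> \<in> ?S"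
    have "0 < ?P \<omega>" using pmf_map_ge(2)[OF w, of X] by simp
    then have "log b (1 / (?n * ?P \<omega>)) = - log b (?P \<omega>) - log b ?n"
      using n b by (simp add: log_divide log_mult)
    then show "pmf M \<omega> * log b (1 / (?n * ?P \<omega>)) = - (pmf M \<omega> * log b (?P \<omega>)) - pmf M \<omega> * log b ?n"
      by (metis (no_types, lifting) minus_diff_eq minus_mult_right right_diff_distrib')
  qed
  also have "\<dots> = rv_ent b M X - log b ?n"
    by (simp add: sum_subtractf sum_negf ent_pointwise[OF fin] sum_distrib_right[symmetric] sum_pmf_S[OF fin])
  finally show ?thesis by simp
qed


lemma marg:
  assumes fin: "finite (set_pmf M)"
  shows "(\<Sum>x\<in>X ` set_pmf M. pmf (map_pmf (\<lambda>\<omega>. (X \<omega>, Z \<omega>)) M) (x, z)) = pmf (map_pmf Z M) z"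
proof -
  let ?S = "set_pmf M"
  have "pmf (map_pmf Z M) z = (\<Sum>\<omega>\<in>?S. if Z \<omega> = z then pmf M \<omega> else 0)"
    by (simp add: pmf_map_fiber[OF fin order_refl] sum.inter_filter[OF fin])
  also have "\<dots> = (\<Sum>x\<in>X ` ?S. \<Sum>\<omega>\<in>{\<omega>\<in>?S. X \<omega> = x}. if Z \<omega> = z then pmf M \<omega> else 0)"
    using fin by (rule sum.image_gen)
  also have "\<dots> = (\<Sum>x\<in>X ` ?S. pmf (map_pmf (\<lambda>\<omega>. (X \<omega>, Z \<omega>)) M) (x, z))"
  proof (rule sum.cong[OF refl])
    fix x assume "x \<in> X ` ?S"
    have f2: "finite {\<omega>\<in>?S. X \<omega> = x}" using fin by simp
    have "(\<Sum>\<omega>\<in>{\<omega>\<in>?S. X \<omega> = x}. if Z \<omega> = z then pmf M \<omega> else 0) = sum (pmf M) {\<omega>\<in>{\<omega>\<in>?S. X \<omega> = x}. Z \<omega> = z}"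
      by (rule sum.inter_filter[OF f2, symmetric])
    also have "{\<omega>\<in>{\<omega>\<in>?S. X \<omega> = x}. Z \<omega> = z} = {\<omega>\<in>?S. (X \<omega>, Z \<omega>) = (x, z)}" by auto
    finally show "(\<Sum>\<omega>\<in>{\<omega>\<in>?S. X \<omega> = x}. if Z \<omega> = z then pmf M \<omega> else 0) = pmf (map_pmf (\<lambda>\<omega>. (X \<omega>, Z \<omega>)) M) (x, z)"
      by (simp add: pmf_map_fiber[OF fin order_refl])
  qed
  finally show ?thesis by simp
qed

lemma ent_submod:
  assumes b: "1 < b" and fin: "finite (set_pmf M)"
  shows "rv_ent b M (\<lambda>\<omega>. (X \<omega>, Y \<omega>, Z \<omega>)) + rv_ent b M Z
     \<le> rv_ent b M (\<lambda>\<omega>. (X \<omega>, Z \<omega>)) + rv_ent b M (\<lambda>\<omega>. (Y \<omega>, Z \<omega>))"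
proof -
  let ?S = "set_pmf M"
  define V where "V = (\<lambda>\<omega>. (X \<omega>, Y \<omega>, Z \<omega>))"
  define XZ where "XZ = (\<lambda>\<omega>. (X \<omega>, Z \<omega>))"
  define YZ where "YZ = (\<lambda>\<omega>. (Y \<omega>, Z \<omega>))"
  define pV where "pV = pmf (map_pmf V M)"
  define pXZ where "pXZ = pmf (map_pmf XZ M)"
  define pYZ where "pYZ = pmf (map_pmf YZ M)"
  define pZ where "pZ = pmf (map_pmf Z M)"
  define G where "G = (\<lambda>(x, y, z). pXZ (x, z) * pYZ (y, z) / (pV (x, y, z) * pZ z))"
  have posV: "0 < pV (V \<omega>)" if "\<omega> \<in> ?S" for \<omega> unfolding pV_def by (rule pmf_map_ge(2)[OF that])
  have posXZ: "0 < pXZ (XZ \<omega>)" if "\<omega> \<in> ?S" for \<omega> unfolding pXZ_def by (rule pmf_map_ge(2)[OF that])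
  have posYZ: "0 < pYZ (YZ \<omega>)" if "\<omega> \<in> ?S" for \<omega> unfolding pYZ_def by (rule pmf_map_ge(2)[OF that])
  have posZ: "0 < pZ (Z \<omega>)" if "\<omega> \<in> ?S" for \<omega> unfolding pZ_def by (rule pmf_map_ge(2)[OF that])
  have Gpos: "0 < G (V \<omega>)" if "\<omega> \<in> ?S" for \<omega>
    using posV[OF that] posXZ[OF that] posYZ[OF that] posZ[OF that]
    by (simp add: G_def V_def XZ_def YZ_def)
  have "(\<Sum>\<omega>\<in>?S. pmf M \<omega> * log b (G (V \<omega>))) \<le> 0"
  proof (rule gibbs[OF b fin])
    show "sum (pmf M) ?S = 1" using fin by (rule sum_pmf_S)
    show "0 < G (V \<omega>)" if "\<omega> \<in> ?S" for \<omega> using Gpos[OF that] .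
    have "(\<Sum>\<omega>\<in>?S. pmf M \<omega> * G (V \<omega>)) = (\<Sum>v\<in>V ` ?S. pV v * G v)"
      unfolding pV_def by (rule group_sum[OF fin])
    also have "\<dots> = (\<Sum>v\<in>V ` ?S. (\<lambda>(x, y, z). pXZ (x, z) * pYZ (y, z) / pZ z) v)"
    proof (rule sum.cong[OF refl])
      fix v assume "v \<in> V ` ?S"
      then obtain \<omega> where w: "\<omega> \<in> ?S" "v = V \<omega>" by auto
      then show "pV v * G v = (\<lambda>(x, y, z). pXZ (x, z) * pYZ (y, z) / pZ z) v"
        using posV[OF w(1)] by (auto simp: G_def split: prod.splits)
    qed
    also have "\<dots> \<le> (\<Sum>v\<in>X ` ?S \<times> Y ` ?S \<times> Z ` ?S. (\<lambda>(x, y, z). pXZ (x, z) * pYZ (y, z) / pZ z) v)"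
      by (rule sum_mono2) (auto simp: fin V_def pXZ_def pYZ_def pZ_def)
    also have "\<dots> = (\<Sum>x\<in>X ` ?S. \<Sum>y\<in>Y ` ?S. \<Sum>z\<in>Z ` ?S. pXZ (x, z) * pYZ (y, z) / pZ z)"
      by (simp add: sum.cartesian_product)
    also have "\<dots> = (\<Sum>z\<in>Z ` ?S. (\<Sum>x\<in>X ` ?S. pXZ (x, z)) * (\<Sum>y\<in>Y ` ?S. pYZ (y, z)) / pZ z)"
      by (simp add: sum.swap[of _ "Z ` ?S"] sum.swap[of _ "Y ` ?S" "X ` ?S"] sum_distrib_left sum_distrib_right sum_divide_distrib)
    also have "\<dots> = (\<Sum>z\<in>Z ` ?S. pZ z)"
    proof (rule sum.cong[OF refl])
      fix z assume "z \<in> Z ` ?S"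
      then obtain \<omega> where w: "\<omega> \<in> ?S" "z = Z \<omega>" by auto
      have "(\<Sum>x\<in>X ` ?S. pXZ (x, z)) = pZ z" unfolding pXZ_def pZ_def XZ_def by (rule marg[OF fin])
      moreover have "(\<Sum>y\<in>Y ` ?S. pYZ (y, z)) = pZ z" unfolding pYZ_def pZ_def YZ_def by (rule marg[OF fin])
      ultimately show "(\<Sum>x\<in>X ` ?S. pXZ (x, z)) * (\<Sum>y\<in>Y ` ?S. pYZ (y, z)) / pZ z = pZ z"
        using posZ[OF w(1)] w(2) by simp
    qed
    also have "\<dots> = 1" using sum_pmf_S[of "map_pmf Z M"] fin by (simp add: pZ_def)
    finally show "(\<Sum>\<omega>\<in>?S. pmf M \<omega> * G (V \<omega>)) \<le> 1" .
  qed simp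
  also have "(\<Sum>\<omega>\<in>?S. pmf M \<omega> * log b (G (V \<omega>))) =
     (\<Sum>\<omega>\<in>?S. pmf M \<omega> * log b (pXZ (XZ \<omega>))) + (\<Sum>\<omega>\<in>?S. pmf M \<omega> * log b (pYZ (YZ \<omega>)))
     - (\<Sum>\<omega>\<in>?S. pmf M \<omega> * log b (pV (V \<omega>))) - (\<Sum>\<omega>\<in>?S. pmf M \<omega> * log b (pZ (Z \<omega>)))"
    unfolding sum.distrib[symmetric] sum_subtractf[symmetric]
  proof (rule sum.cong[OF refl])
    fix \<omega> assume w: "\<omega> \<in> ?S"
    have "log b (G (V \<omega>)) = log b (pXZ (XZ \<omega>)) + log b (pYZ (YZ \<omega>)) - log b (pV (V \<omega>)) - log b (pZ (Z \<omega>))"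
      using posV[OF w] posXZ[OF w] posYZ[OF w] posZ[OF w] b
      by (simp add: G_def V_def XZ_def YZ_def log_divide log_mult)
    then show "pmf M \<omega> * log b (G (V \<omega>)) = pmf M \<omega> * log b (pXZ (XZ \<omega>)) + pmf M \<omega> * log b (pYZ (YZ \<omega>)) -
         pmf M \<omega> * log b (pV (V \<omega>)) - pmf M \<omega> * log b (pZ (Z \<omega>))"
      by (simp only: right_diff_distrib distrib_left)
  qed
  finally have *: "(\<Sum>\<omega>\<in>?S. pmf M \<omega> * log b (pXZ (XZ \<omega>))) + (\<Sum>\<omega>\<in>?S. pmf M \<omega> * log b (pYZ (YZ \<omega>)))
     - (\<Sum>\<omega>\<in>?S. pmf M \<omega> * log b (pV (V \<omega>))) - (\<Sum>\<omega>\<in>?S. pmf M \<omega> * log b (pZ (Z \<omega>))) \<le> 0" .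
  have e1: "rv_ent b M V = - (\<Sum>\<omega>\<in>?S. pmf M \<omega> * log b (pV (V \<omega>)))" unfolding pV_def by (rule ent_pointwise[OF fin])
  have e2: "rv_ent b M XZ = - (\<Sum>\<omega>\<in>?S. pmf M \<omega> * log b (pXZ (XZ \<omega>)))" unfolding pXZ_def by (rule ent_pointwise[OF fin])
  have e3: "rv_ent b M YZ = - (\<Sum>\<omega>\<in>?S. pmf M \<omega> * log b (pYZ (YZ \<omega>)))" unfolding pYZ_def by (rule ent_pointwise[OF fin])
  have e4: "rv_ent b M Z = - (\<Sum>\<omega>\<in>?S. pmf M \<omega> * log b (pZ (Z \<omega>)))" unfolding pZ_def by (rule ent_pointwise[OF fin])
  have "rv_ent b M V + rv_ent b M Z \<le> rv_ent b M XZ + rv_ent b M YZ"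
    using * e1 e2 e3 e4 by linarith
  then show ?thesis unfolding V_def XZ_def YZ_def .
qed


lemma ent_subadd:
  assumes b: "1 < b" and fin: "finite (set_pmf M)"
  shows "rv_ent b M (\<lambda>\<omega>. (X \<omega>, Y \<omega>)) \<le> rv_ent b M X + rv_ent b M Y"
proof -
  have "rv_ent b M (\<lambda>\<omega>. (X \<omega>, Y \<omega>, ())) + rv_ent b M (\<lambda>\<omega>. ())
     \<le> rv_ent b M (\<lambda>\<omega>. (X \<omega>, ())) + rv_ent b M (\<lambda>\<omega>. (Y \<omega>, ()))"
    by (rule ent_submod[OF b fin])
  moreover have "rv_ent b M (\<lambda>\<omega>. (X \<omega>, Y \<omega>, ())) = rv_ent b M (\<lambda>\<omega>. (X \<omega>, Y \<omega>))" by (rule ent_eq_part) auto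
  moreover have "rv_ent b M (\<lambda>\<omega>. (X \<omega>, ())) = rv_ent b M X" by (rule ent_eq_part) auto
  moreover have "rv_ent b M (\<lambda>\<omega>. (Y \<omega>, ())) = rv_ent b M Y" by (rule ent_eq_part) auto
  ultimately show ?thesis by (simp add: ent_const)
qed

lemma ent_submod_gen:
  assumes b: "1 < b" and fin: "finite (set_pmf M)"
    and J: "\<And>x y. x \<in> set_pmf M \<Longrightarrow> y \<in> set_pmf M \<Longrightarrow> J x = J y \<longleftrightarrow> U x = U y \<and> V x = V y"
    and CU: "\<And>x y. x \<in> set_pmf M \<Longrightarrow> y \<in> set_pmf M \<Longrightarrow> U x = U y \<Longrightarrow> C x = C y"
    and CV: "\<And>x y. x \<in> set_pmf M \<Longrightarrow> y \<in> set_pmf M \<Longrightarrow> V x = V y \<Longrightarrow> C x = C y"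
  shows "rv_ent b M J + rv_ent b M C \<le> rv_ent b M U + rv_ent b M V"
proof -
  have "rv_ent b M (\<lambda>\<omega>. (U \<omega>, V \<omega>, C \<omega>)) + rv_ent b M C
     \<le> rv_ent b M (\<lambda>\<omega>. (U \<omega>, C \<omega>)) + rv_ent b M (\<lambda>\<omega>. (V \<omega>, C \<omega>))"
    by (rule ent_submod[OF b fin])
  moreover have "rv_ent b M (\<lambda>\<omega>. (U \<omega>, V \<omega>, C \<omega>)) = rv_ent b M J"
    by (rule ent_eq_part) (auto simp: J dest: CU)
  moreover have "rv_ent b M (\<lambda>\<omega>. (U \<omega>, C \<omega>)) = rv_ent b M U" by (rule ent_eq_part) (auto dest: CU)
  moreover have "rv_ent b M (\<lambda>\<omega>. (V \<omega>, C \<omega>)) = rv_ent b M V" by (rule ent_eq_part) (auto dest: CV)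
  ultimately show ?thesis by simp
qed

lemma ent_subadd_gen:
  assumes b: "1 < b" and fin: "finite (set_pmf M)"
    and J: "\<And>x y. x \<in> set_pmf M \<Longrightarrow> y \<in> set_pmf M \<Longrightarrow> J x = J y \<longleftrightarrow> U x = U y \<and> V x = V y"
  shows "rv_ent b M J \<le> rv_ent b M U + rv_ent b M V"
proof -
  have "rv_ent b M J = rv_ent b M (\<lambda>\<omega>. (U \<omega>, V \<omega>))" by (rule ent_eq_part) (auto simp: J)
  also have "\<dots> \<le> rv_ent b M U + rv_ent b M V" by (rule ent_subadd[OF b fin])
  finally show ?thesis .
qed

lemma ent_transfer:
  assumes "map_pmf T M = map_pmf T' M"
  shows "rv_ent b M (\<lambda>\<omega>. g (T \<omega>)) = rv_ent b M (\<lambda>\<omega>. g (T' \<omega>))"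
proof -
  have "map_pmf (\<lambda>\<omega>. g (T \<omega>)) M = map_pmf g (map_pmf T M)" by (simp add: map_pmf_comp)
  moreover have "map_pmf (\<lambda>\<omega>. g (T' \<omega>)) M = map_pmf g (map_pmf T' M)" by (simp add: map_pmf_comp)
  ultimately show ?thesis unfolding rv_ent_def using assms by simp
qed

lemma pmf_ent_pair:
  assumes fp: "finite (set_pmf p)" and fq: "finite (set_pmf q)"
  shows "pmf_ent b (pair_pmf p q) = pmf_ent b p + pmf_ent b q"
proof -
  have sp: "sum (pmf p) (set_pmf p) = 1" by (rule sum_pmf_S[OF fp])
  have sq: "sum (pmf q) (set_pmf q) = 1" by (rule sum_pmf_S[OF fq])
  have "(\<Sum>x\<in>set_pmf (pair_pmf p q). pmf (pair_pmf p q) x * log b (pmf (pair_pmf p q) x))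
      = (\<Sum>a\<in>set_pmf p. \<Sum>c\<in>set_pmf q. pmf p a * pmf q c * log b (pmf p a * pmf q c))"
    apply (simp add: set_pair_pmf sum.cartesian_product split_beta)
    apply (intro sum.cong refl)
    apply (auto simp: pmf_pair)
    done
  also have "\<dots> = (\<Sum>a\<in>set_pmf p. \<Sum>c\<in>set_pmf q. pmf q c * (pmf p a * log b (pmf p a)) + pmf p a * (pmf q c * log b (pmf q c)))"
  proof (intro sum.cong refl)
    fix a c assume "a \<in> set_pmf p" "c \<in> set_pmf q"
    then have "0 < pmf p a" "0 < pmf q c" by (simp_all add: pmf_positive)
    then show "pmf p a * pmf q c * log b (pmf p a * pmf q c) = pmf q c * (pmf p a * log b (pmf p a)) + pmf p a * (pmf q c * log b (pmf q c))"
      by (simp add: log_mult algebra_simps)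
  qed
  also have "\<dots> = (\<Sum>a\<in>set_pmf p. pmf p a * log b (pmf p a)) + (\<Sum>c\<in>set_pmf q. pmf q c * log b (pmf q c))"
    by (simp add: sum.distrib sum_distrib_right[symmetric] sum_distrib_left[symmetric] sp sq)
  finally show ?thesis unfolding pmf_ent_def by simp
qed

lemma pmf_ent_uniform:
  assumes "finite A" "A \<noteq> {}"
  shows "pmf_ent b (pmf_of_set A) = log b (real (card A))"
proof -
  have c: "0 < card A" using assms by (simp add: card_gt_0_iff)
  have "pmf_ent b (pmf_of_set A) = - (\<Sum>x\<in>A. 1 / card A * log b (1 / card A))"
    unfolding pmf_ent_def using assms by (intro arg_cong[where f=uminus] sum.cong) auto
  also have "\<dots> = - log b (1 / card A)" using c by simp
  also have "\<dots> = log b (card A)" using c by (simp add: log_divide)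
  finally show ?thesis .
qed


lemma ex2: "(x::2) = 0 \<or> x = 1"
proof (cases x)
  case (of_int z)
  then have "z = 0 \<or> z = 1" by auto
  then show ?thesis using of_int by auto
qed

lemma ex3: "(x::3) = 0 \<or> x = 1 \<or> x = 2"
proof (cases x)
  case (of_int z)
  then have "z = 0 \<or> z = 1 \<or> z = 2" by auto
  then show ?thesis using of_int by auto
qed

lemma UNIV2: "(UNIV :: 2 set) = {0, 1}" using ex2 by auto
lemma UNIV3: "(UNIV :: 3 set) = {0, 1, 2}" using ex3 by auto

lemma fun2_eq: "((f :: 2 \<Rightarrow> 'a) = g) \<longleftrightarrow> f 0 = g 0 \<and> f 1 = g 1"
  by (metis ex2 ext)

lemma fun3_eq: "((f :: 3 \<Rightarrow> 'a) = g) \<longleftrightarrow> f 0 = g 0 \<and> f 1 = g 1 \<and> f 2 = g 2"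
  by (metis ex3 ext)

lemma rv_simps:
  "msg_rv k \<omega> = fst \<omega> k"
  "user_rv \<omega> = fst (snd \<omega>)"
  "query_rv Q n k \<omega> = Q n k (fst (snd \<omega>))"
  "ans_rv Q Ans n k \<omega> = Ans n (Q n k (fst (snd \<omega>))) (fst \<omega>) (snd (snd \<omega>))"
  "others_rv k \<omega> = (\<lambda>j. if j = k then None else Some (fst \<omega> j))"
  by (simp_all add: msg_rv_def user_rv_def query_rv_def ans_rv_def others_rv_def split_beta)

lemma b_gt1: "1 < qbase (TYPE('f::{finite,field}))"
proof -
  have "card {0::'f, 1} \<le> CARD('f)" using card_mono[of "UNIV::'f set" "{0,1}"] by simp
  then show ?thesis by (simp add: qbase_def)
qed

lemma set_joint: "set_pmf (joint pF pR :: ('f::finite) sample pmf) = UNIV \<times> set_pmf pF \<times> set_pmf pR"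
  by (simp add: joint_def set_pair_pmf)

lemma fin_joint: "finite (set_pmf pF) \<Longrightarrow> finite (set_pmf pR) \<Longrightarrow> finite (set_pmf (joint pF pR :: ('f::finite) sample pmf))"
  by (simp add: set_joint)

lemma ent3:
  assumes fF: "finite (set_pmf pF)" and fR: "finite (set_pmf pR)"
  shows "rv_ent b (joint pF pR :: ('f::finite) sample pmf) (\<lambda>\<omega>. (X (fst \<omega>), Y (fst (snd \<omega>)), Z (snd (snd \<omega>))))
    = rv_ent b (pmf_of_set UNIV) X + rv_ent b pF Y + rv_ent b pR Z"
proof -
  have e: "(\<lambda>\<omega>. (X (fst \<omega>), Y (fst (snd \<omega>)), Z (snd (snd \<omega>)))) = (\<lambda>(a, b). (X a, (\<lambda>(c, d). (Y c, Z d)) b))"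
    by auto
  have "map_pmf (\<lambda>\<omega>. (X (fst \<omega>), Y (fst (snd \<omega>)), Z (snd (snd \<omega>)))) (joint pF pR :: ('f::finite) sample pmf)
     = pair_pmf (map_pmf X (pmf_of_set UNIV)) (pair_pmf (map_pmf Y pF) (map_pmf Z pR))"
    unfolding joint_def e map_pair by (simp add: map_pair)
  moreover have "finite (set_pmf (map_pmf X (pmf_of_set (UNIV :: (3 \<Rightarrow> 'f) set))))" by simp
  moreover have "finite (set_pmf (map_pmf Y pF))" using fF by simp
  moreover have "finite (set_pmf (map_pmf Z pR))" using fR by simp
  moreover have "finite (set_pmf (pair_pmf (map_pmf Y pF) (map_pmf Z pR)))" using fF fR by (simp add: set_pair_pmf)
  ultimately show ?thesis unfolding rv_ent_def by (simp add: pmf_ent_pair)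
qed

lemma ent_uniform_proj:
  fixes j :: 3
  shows "rv_ent (qbase TYPE('f::{finite,field})) (pmf_of_set (UNIV :: (3 \<Rightarrow> 'f) set)) (\<lambda>w. w j) = 1"
proof -
  let ?b = "qbase TYPE('f)"
  let ?U = "pmf_of_set (UNIV :: (3 \<Rightarrow> 'f) set)"
  have b: "1 < ?b" by (rule b_gt1)
  have fin: "finite (set_pmf ?U)" by simp
  have le1: "rv_ent ?b ?U (\<lambda>w. w i) \<le> 1" for i :: 3
  proof -
    have "rv_ent ?b ?U (\<lambda>w. w i) \<le> log ?b (card ((\<lambda>w. w i) ` set_pmf ?U))" by (rule ent_le_card[OF b fin])
    also have "\<dots> \<le> log ?b (CARD('f))"
    proof (rule log_le_cancel_iff[THEN iffD2, OF b])
      show "0 < real (card ((\<lambda>w. w i) ` set_pmf ?U))" by (simp add: card_gt_0_iff)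
      show "0 < real CARD('f)" by simp
      show "real (card ((\<lambda>w. w i) ` set_pmf ?U)) \<le> real CARD('f)" by (simp add: card_mono)
    qed
    also have "\<dots> = 1" using b by (simp add: qbase_def)
    finally show ?thesis .
  qed
  have "rv_ent ?b ?U (\<lambda>w. w) = log ?b (CARD(3 \<Rightarrow> 'f))"
    unfolding rv_ent_def by (simp add: pmf_ent_uniform)
  also have "\<dots> = 3" using b by (simp add: card_fun qbase_def log_nat_power)
  finally have h3: "rv_ent ?b ?U (\<lambda>w. w) = 3" .
  have "rv_ent ?b ?U (\<lambda>w. w) \<le> rv_ent ?b ?U (\<lambda>w. w 0) + rv_ent ?b ?U (\<lambda>w. (w 1, w 2))"
    by (rule ent_subadd_gen[OF b fin]) (auto simp: fun3_eq)
  also have "rv_ent ?b ?U (\<lambda>w. (w 1, w 2)) \<le> rv_ent ?b ?U (\<lambda>w. w 1) + rv_ent ?b ?U (\<lambda>w. w 2)"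
    by (rule ent_subadd[OF b fin])
  finally have "3 \<le> rv_ent ?b ?U (\<lambda>w. w 0) + (rv_ent ?b ?U (\<lambda>w. w 1) + rv_ent ?b ?U (\<lambda>w. w 2))"
    using h3 by linarith
  then show ?thesis using le1[of 0] le1[of 1] le1[of 2] ex3[of j] by auto
qed


lemma others_det:
  assumes "others_rv k' x = others_rv k' y" "k \<noteq> k'"
  shows "fst x k = fst y k"
  using fun_cong[OF assms(1), of k] assms(2) by (simp add: rv_simps)

lemma Zle:
  fixes Ans :: "2 \<Rightarrow> nat \<Rightarrow> (3 \<Rightarrow> 'f::{finite,field}) \<Rightarrow> nat \<Rightarrow> nat"
  assumes sch: "spir_scheme pF pR Q Ans" and kk: "k \<noteq> k'"
  shows "rv_ent (qbase TYPE('f)) (joint pF pR :: 'f sample pmf) (\<lambda>\<omega>. (ans_rv Q Ans n k \<omega>, user_rv \<omega>))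
       + rv_ent (qbase TYPE('f)) (joint pF pR :: 'f sample pmf) (\<lambda>\<omega>. (msg_rv k \<omega>, user_rv \<omega>))
       - rv_ent (qbase TYPE('f)) (joint pF pR :: 'f sample pmf) (\<lambda>\<omega>. (ans_rv Q Ans n k \<omega>, msg_rv k \<omega>, user_rv \<omega>))
       - rv_ent (qbase TYPE('f)) (joint pF pR :: 'f sample pmf) user_rv \<le> 0"
proof -
  define b where "b = qbase TYPE('f)"
  define M where "M = (joint pF pR :: 'f sample pmf)"
  have b: "1 < b" unfolding b_def by (rule b_gt1)
  have fin: "finite (set_pmf M)" unfolding M_def using sch by (simp add: spir_scheme_def fin_joint)
  have fF: "finite (set_pmf pF)" and fR: "finite (set_pmf pR)" using sch by (simp_all add: spir_scheme_def)
  define Fv where "Fv = (user_rv :: 'f sample \<Rightarrow> nat)"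
  define Wk where "Wk = (msg_rv k :: 'f sample \<Rightarrow> 'f)"
  define T where "T = (query_rv Q n k :: 'f sample \<Rightarrow> nat)"
  define A where "A = (ans_rv Q Ans n k :: 'f sample \<Rightarrow> nat)"
  define T' where "T' = (query_rv Q n k' :: 'f sample \<Rightarrow> nat)"
  define A' where "A' = (ans_rv Q Ans n k' :: 'f sample \<Rightarrow> nat)"
  define A'f where "A'f = (\<lambda>\<omega>::'f sample. \<lambda>m. ans_rv Q Ans m k' \<omega>)"
  define O' where "O' = (others_rv k' :: 'f sample \<Rightarrow> _)"
  define WR where "WR = (\<lambda>\<omega>::'f sample. (fst \<omega>, snd (snd \<omega>)))"
  let ?H = "rv_ent b M"
  note defs = Fv_def Wk_def T_def A_def T'_def A'_def A'f_def O'_def WR_def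
  have s1: "?H (\<lambda>\<omega>. (A \<omega>, Fv \<omega>)) + ?H T \<le> ?H (\<lambda>\<omega>. (A \<omega>, T \<omega>)) + ?H Fv"
    by (rule ent_submod_gen[OF b fin]) (auto simp: defs rv_simps)
  have s2: "?H (\<lambda>\<omega>. (Wk \<omega>, Fv \<omega>)) + ?H T \<le> ?H (\<lambda>\<omega>. (Wk \<omega>, T \<omega>)) + ?H Fv"
    by (rule ent_submod_gen[OF b fin]) (auto simp: defs rv_simps)
  have s3a: "?H (\<lambda>\<omega>. (WR \<omega>, T \<omega>)) \<le> ?H WR + ?H T"
    by (rule ent_subadd[OF b fin])
  have s3i: "?H (\<lambda>\<omega>. (Fv \<omega>, WR \<omega>)) = ?H Fv + ?H WR"
  proof -
    have i1: "?H (\<lambda>\<omega>. (fst \<omega>, fst (snd \<omega>), snd (snd \<omega>))) = rv_ent b (pmf_of_set (UNIV::(3\<Rightarrow>'f) set)) (\<lambda>w. w) + rv_ent b pF (\<lambda>f. f) + rv_ent b pR (\<lambda>r. r)"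
      using ent3[OF fF fR, of b "\<lambda>w::3\<Rightarrow>'f. w" "\<lambda>f. f" "\<lambda>r. r"] unfolding M_def by simp
    have i2: "?H (\<lambda>\<omega>. ((), fst (snd \<omega>), ())) = rv_ent b pF (\<lambda>f. f)"
      using ent3[OF fF fR, of b "\<lambda>w::3\<Rightarrow>'f. ()" "\<lambda>f. f" "\<lambda>r. ()"] unfolding M_def by (simp add: ent_const)
    have i3: "?H (\<lambda>\<omega>. (fst \<omega>, (), snd (snd \<omega>))) = rv_ent b (pmf_of_set (UNIV::(3\<Rightarrow>'f) set)) (\<lambda>w. w) + rv_ent b pR (\<lambda>r. r)"
      using ent3[OF fF fR, of b "\<lambda>w::3\<Rightarrow>'f. w" "\<lambda>f. ()" "\<lambda>r. r"] unfolding M_def by (simp add: ent_const)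
    have e1: "?H (\<lambda>\<omega>. (Fv \<omega>, WR \<omega>)) = ?H (\<lambda>\<omega>. (fst \<omega>, fst (snd \<omega>), snd (snd \<omega>)))"
      by (rule ent_eq_part) (auto simp: defs rv_simps)
    have e2: "?H Fv = ?H (\<lambda>\<omega>. ((), fst (snd \<omega>), ()))"
      by (rule ent_eq_part) (auto simp: defs rv_simps)
    have e3: "?H WR = ?H (\<lambda>\<omega>. (fst \<omega>, (), snd (snd \<omega>)))"
      by (rule ent_eq_part) (auto simp: defs rv_simps)
    show ?thesis using i1 i2 i3 e1 e2 e3 by linarith
  qed
  have s3b: "?H (\<lambda>\<omega>. (Fv \<omega>, WR \<omega>)) + ?H (\<lambda>\<omega>. (A \<omega>, Wk \<omega>, T \<omega>)) \<le> ?H (\<lambda>\<omega>. (Fv \<omega>, A \<omega>, Wk \<omega>)) + ?H (\<lambda>\<omega>. (WR \<omega>, T \<omega>))"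
    by (rule ent_submod_gen[OF b fin]) (auto simp: defs rv_simps)
  have s4: "?H (\<lambda>\<omega>. (A \<omega>, Wk \<omega>, Fv \<omega>)) = ?H (\<lambda>\<omega>. (Fv \<omega>, A \<omega>, Wk \<omega>))"
    by (rule ent_eq_part) auto
  have UP: "map_pmf (\<lambda>\<omega>. (T \<omega>, A \<omega>, fst \<omega>, snd (snd \<omega>))) M = map_pmf (\<lambda>\<omega>. (T' \<omega>, A' \<omega>, fst \<omega>, snd (snd \<omega>))) M"
    using sch unfolding spir_scheme_def defs M_def by blast
  have t1: "?H (\<lambda>\<omega>. (A \<omega>, T \<omega>)) = ?H (\<lambda>\<omega>. (A' \<omega>, T' \<omega>))"
    using ent_transfer[OF UP, of b "\<lambda>(q, a, w, r). (a, q)"] by simp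
  have t2: "?H (\<lambda>\<omega>. (Wk \<omega>, T \<omega>)) = ?H (\<lambda>\<omega>. (Wk \<omega>, T' \<omega>))"
    using ent_transfer[OF UP, of b "\<lambda>(q, a, w, r). (w k, q)"] by (simp add: Wk_def rv_simps(1))
  have t3: "?H (\<lambda>\<omega>. (A \<omega>, Wk \<omega>, T \<omega>)) = ?H (\<lambda>\<omega>. (A' \<omega>, Wk \<omega>, T' \<omega>))"
    using ent_transfer[OF UP, of b "\<lambda>(q, a, w, r). (a, w k, q)"] by (simp add: Wk_def rv_simps(1))
  have t4: "?H T = ?H T'"
    using ent_transfer[OF UP, of b "\<lambda>(q, a, w, r). q"] by simp
  have u1: "?H (\<lambda>\<omega>. (Wk \<omega>, T' \<omega>)) \<le> ?H Wk + ?H T'"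
    by (rule ent_subadd[OF b fin])
  have u2: "?H (\<lambda>\<omega>. (Wk \<omega>, (Fv \<omega>, A'f \<omega>))) + ?H (\<lambda>\<omega>. (A' \<omega>, T' \<omega>)) \<le> ?H (\<lambda>\<omega>. (Fv \<omega>, A'f \<omega>)) + ?H (\<lambda>\<omega>. (A' \<omega>, Wk \<omega>, T' \<omega>))"
    by (rule ent_submod_gen[OF b fin]) (auto simp: defs rv_simps fun_eq_iff)
  have u3: "?H (\<lambda>\<omega>. (O' \<omega>, (Fv \<omega>, A'f \<omega>))) + ?H Wk \<le> ?H O' + ?H (\<lambda>\<omega>. (Wk \<omega>, (Fv \<omega>, A'f \<omega>)))"
    by (rule ent_submod_gen[OF b fin]) (auto simp: Wk_def O'_def rv_simps(1) dest: others_det[OF _ kk])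
  have DP: "?H O' + ?H (\<lambda>\<omega>. (Fv \<omega>, A'f \<omega>)) - ?H (\<lambda>\<omega>. (O' \<omega>, (Fv \<omega>, A'f \<omega>))) = 0"
    using sch unfolding spir_scheme_def mut_info_def defs M_def b_def by blast
  have "?H (\<lambda>\<omega>. (A \<omega>, Fv \<omega>)) + ?H (\<lambda>\<omega>. (Wk \<omega>, Fv \<omega>)) - ?H (\<lambda>\<omega>. (A \<omega>, Wk \<omega>, Fv \<omega>)) - ?H Fv \<le> 0"
    using s1 s2 s3a s3i s3b s4 t1 t2 t3 t4 u1 u2 u3 DP by linarith
  then show ?thesis unfolding defs b_def M_def .
qed


lemma others_det2:
  assumes "others_rv k x = others_rv k y" "fst x k = fst y k"
  shows "fst x = fst y"
proof
  fix j show "fst x j = fst y j"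
    using fun_cong[OF assms(1), of j] assms(2) by (cases "j = k") (simp_all add: rv_simps)
qed

lemma others_fst: "fst x = fst y \<Longrightarrow> others_rv k x = others_rv k y"
  by (cases x, cases y) (simp add: others_rv_def)

lemma converse:
  fixes Ans :: "2 \<Rightarrow> nat \<Rightarrow> (3 \<Rightarrow> 'f::{finite,field}) \<Rightarrow> nat \<Rightarrow> nat"
  assumes sch: "spir_scheme pF pR Q Ans"
  shows "2 \<le> download pF pR Q Ans \<and> 1 \<le> cr_amount TYPE('f) pR"
proof -
  define b where "b = qbase TYPE('f)"
  define M where "M = (joint pF pR :: 'f sample pmf)"
  have b: "1 < b" unfolding b_def by (rule b_gt1)
  have fin: "finite (set_pmf M)" unfolding M_def using sch by (simp add: spir_scheme_def fin_joint)
  have fF: "finite (set_pmf pF)" and fR: "finite (set_pmf pR)" using sch by (simp_all add: spir_scheme_def)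
  define Fv where "Fv = (user_rv :: 'f sample \<Rightarrow> nat)"
  define Wk where "Wk = (msg_rv 0 :: 'f sample \<Rightarrow> 'f)"
  define Ok where "Ok = (others_rv 0 :: 'f sample \<Rightarrow> _)"
  define A0 where "A0 = (ans_rv Q Ans 0 0 :: 'f sample \<Rightarrow> nat)"
  define A1 where "A1 = (ans_rv Q Ans 1 0 :: 'f sample \<Rightarrow> nat)"
  define Af where "Af = (\<lambda>\<omega>::'f sample. \<lambda>m. ans_rv Q Ans m 0 \<omega>)"
  let ?H = "rv_ent b M"
  note defs = Fv_def Wk_def Ok_def A0_def A1_def Af_def
  have Z0: "?H (\<lambda>\<omega>. (A0 \<omega>, Fv \<omega>)) + ?H (\<lambda>\<omega>. (Wk \<omega>, Fv \<omega>)) - ?H (\<lambda>\<omega>. (A0 \<omega>, Wk \<omega>, Fv \<omega>)) - ?H Fv \<le> 0"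
    using Zle[OF sch, of 0 1 0] unfolding defs b_def M_def by simp
  have Z1: "?H (\<lambda>\<omega>. (A1 \<omega>, Fv \<omega>)) + ?H (\<lambda>\<omega>. (Wk \<omega>, Fv \<omega>)) - ?H (\<lambda>\<omega>. (A1 \<omega>, Wk \<omega>, Fv \<omega>)) - ?H Fv \<le> 0"
    using Zle[OF sch, of 0 1 1] unfolding defs b_def M_def by simp
  have Rel: "?H (\<lambda>\<omega>. (Wk \<omega>, (Fv \<omega>, Af \<omega>))) - ?H (\<lambda>\<omega>. (Fv \<omega>, Af \<omega>)) = 0"
    using sch unfolding spir_scheme_def cond_ent_def defs M_def b_def by blast
  have DP0: "?H Ok + ?H (\<lambda>\<omega>. (Fv \<omega>, Af \<omega>)) - ?H (\<lambda>\<omega>. (Ok \<omega>, (Fv \<omega>, Af \<omega>))) = 0"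
    using sch unfolding spir_scheme_def mut_info_def defs M_def b_def by blast
  have i1: "?H (\<lambda>\<omega>. (fst \<omega>, fst (snd \<omega>), snd (snd \<omega>))) = rv_ent b (pmf_of_set (UNIV::(3\<Rightarrow>'f) set)) (\<lambda>w. w) + rv_ent b pF (\<lambda>f. f) + rv_ent b pR (\<lambda>r. r)"
    using ent3[OF fF fR, of b "\<lambda>w::3\<Rightarrow>'f. w" "\<lambda>f. f" "\<lambda>r. r"] unfolding M_def by simp
  have i2: "?H (\<lambda>\<omega>. ((), fst (snd \<omega>), ())) = rv_ent b pF (\<lambda>f. f)"
    using ent3[OF fF fR, of b "\<lambda>w::3\<Rightarrow>'f. ()" "\<lambda>f. f" "\<lambda>r. ()"] unfolding M_def by (simp add: ent_const)
  have i3: "?H (\<lambda>\<omega>. (fst \<omega>, fst (snd \<omega>), ())) = rv_ent b (pmf_of_set (UNIV::(3\<Rightarrow>'f) set)) (\<lambda>w. w) + rv_ent b pF (\<lambda>f. f)"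
    using ent3[OF fF fR, of b "\<lambda>w::3\<Rightarrow>'f. w" "\<lambda>f. f" "\<lambda>r. ()"] unfolding M_def by (simp add: ent_const)
  have i4: "?H (\<lambda>\<omega>. (fst \<omega> 0, fst (snd \<omega>), ())) = rv_ent b (pmf_of_set (UNIV::(3\<Rightarrow>'f) set)) (\<lambda>w. w 0) + rv_ent b pF (\<lambda>f. f)"
    using ent3[OF fF fR, of b "\<lambda>w::3\<Rightarrow>'f. w 0" "\<lambda>f. f" "\<lambda>r. ()"] unfolding M_def by (simp add: ent_const)
  have u0: "rv_ent b (pmf_of_set (UNIV::(3\<Rightarrow>'f) set)) (\<lambda>w. w 0) = 1"
    unfolding b_def by (rule ent_uniform_proj)
  have hF: "?H Fv = ?H (\<lambda>\<omega>. ((), fst (snd \<omega>), ()))" by (rule ent_eq_part) (auto simp: defs rv_simps)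
  have hWkF: "?H (\<lambda>\<omega>. (Wk \<omega>, Fv \<omega>)) = ?H (\<lambda>\<omega>. (fst \<omega> 0, fst (snd \<omega>), ()))"
    by (rule ent_eq_part) (auto simp: defs rv_simps)
  have hWF: "?H (\<lambda>\<omega>. (fst \<omega>, Fv \<omega>)) = ?H (\<lambda>\<omega>. (fst \<omega>, fst (snd \<omega>), ()))"
    by (rule ent_eq_part) (auto simp: defs rv_simps)
  have Ind: "?H (\<lambda>\<omega>. (Wk \<omega>, Fv \<omega>)) = 1 + ?H Fv" using hF hWkF i2 i4 u0 by simp
  have c1: "?H (\<lambda>\<omega>. (Wk \<omega>, (Fv \<omega>, Af \<omega>))) = ?H (\<lambda>\<omega>. (Wk \<omega>, Fv \<omega>, A0 \<omega>, A1 \<omega>))"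
    by (rule ent_eq_part) (auto simp: defs fun2_eq)
  have c2: "?H (\<lambda>\<omega>. (Fv \<omega>, Af \<omega>)) = ?H (\<lambda>\<omega>. (Fv \<omega>, A0 \<omega>, A1 \<omega>))"
    by (rule ent_eq_part) (auto simp: defs fun2_eq)
  have c3: "?H (\<lambda>\<omega>. (A0 \<omega>, Fv \<omega>)) = ?H (\<lambda>\<omega>. (Fv \<omega>, A0 \<omega>))" by (rule ent_eq_part) auto
  have c4: "?H (\<lambda>\<omega>. (A1 \<omega>, Fv \<omega>)) = ?H (\<lambda>\<omega>. (Fv \<omega>, A1 \<omega>))" by (rule ent_eq_part) auto
  have c5: "?H (\<lambda>\<omega>. (A0 \<omega>, Wk \<omega>, Fv \<omega>)) = ?H (\<lambda>\<omega>. (Wk \<omega>, Fv \<omega>, A0 \<omega>))" by (rule ent_eq_part) auto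
  have c6: "?H (\<lambda>\<omega>. (A1 \<omega>, Wk \<omega>, Fv \<omega>)) = ?H (\<lambda>\<omega>. (Wk \<omega>, Fv \<omega>, A1 \<omega>))" by (rule ent_eq_part) auto
  have m1: "?H (\<lambda>\<omega>. (Wk \<omega>, Fv \<omega>, A0 \<omega>)) \<le> ?H (\<lambda>\<omega>. (Wk \<omega>, Fv \<omega>, A0 \<omega>, A1 \<omega>))"
    by (rule ent_mono_part[OF b fin]) auto
  have m2: "?H (\<lambda>\<omega>. (Wk \<omega>, Fv \<omega>, A1 \<omega>)) \<le> ?H (\<lambda>\<omega>. (Wk \<omega>, Fv \<omega>, A0 \<omega>, A1 \<omega>))"
    by (rule ent_mono_part[OF b fin]) auto
  have a1: "?H (\<lambda>\<omega>. (Fv \<omega>, A0 \<omega>, A1 \<omega>)) \<le> ?H A1 + ?H (\<lambda>\<omega>. (Fv \<omega>, A0 \<omega>))"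
    by (rule ent_subadd_gen[OF b fin]) auto
  have a0: "?H (\<lambda>\<omega>. (Fv \<omega>, A0 \<omega>, A1 \<omega>)) \<le> ?H A0 + ?H (\<lambda>\<omega>. (Fv \<omega>, A1 \<omega>))"
    by (rule ent_subadd_gen[OF b fin]) auto
  have sm: "?H (\<lambda>\<omega>. (Fv \<omega>, A0 \<omega>, A1 \<omega>)) + ?H Fv \<le> ?H (\<lambda>\<omega>. (Fv \<omega>, A0 \<omega>)) + ?H (\<lambda>\<omega>. (Fv \<omega>, A1 \<omega>))"
    by (rule ent_submod_gen[OF b fin]) auto
  have HA0: "1 \<le> ?H A0" and HA1: "1 \<le> ?H A1"
    and HFA: "2 \<le> ?H (\<lambda>\<omega>. (Fv \<omega>, Af \<omega>)) - ?H Fv"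
    using Z0 Z1 Rel Ind c1 c2 c3 c4 c5 c6 m1 m2 a1 a0 sm by linarith+
  have m3: "?H (\<lambda>\<omega>. (Ok \<omega>, (Fv \<omega>, Af \<omega>))) \<le> ?H (\<lambda>\<omega>. (fst \<omega>, Af \<omega>, Fv \<omega>))"
    by (rule ent_mono_part[OF b fin]) (auto simp: defs rv_simps)
  have a3: "?H (\<lambda>\<omega>. (fst \<omega>, Fv \<omega>)) \<le> ?H Ok + ?H (\<lambda>\<omega>. (Wk \<omega>, Fv \<omega>))"
    by (rule ent_subadd_gen[OF b fin]) (auto simp: Ok_def Wk_def rv_simps(1) intro: others_det2 others_fst)
  have m4: "?H (\<lambda>\<omega>. (fst \<omega>, Af \<omega>, Fv \<omega>)) \<le> ?H (\<lambda>\<omega>. (fst \<omega>, fst (snd \<omega>), snd (snd \<omega>)))"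
    by (rule ent_mono_part[OF b fin]) (auto simp: defs rv_simps)
  have cr: "1 \<le> rv_ent b pR (\<lambda>r. r)"
    using DP0 m3 a3 m4 i1 i3 hWF Ind HFA by linarith
  have cr2: "cr_amount TYPE('f) pR = rv_ent b pR (\<lambda>r. r)"
    by (simp add: cr_amount_def rv_ent_def b_def)
  have dl: "?H (ans_rv Q Ans n 0) \<le> log b (card (\<Union>k. ans_rv Q Ans n k ` set_pmf M))" for n
  proof -
    have "?H (ans_rv Q Ans n 0) \<le> log b (card (ans_rv Q Ans n 0 ` set_pmf M))" by (rule ent_le_card[OF b fin])
    also have "\<dots> \<le> log b (card (\<Union>k. ans_rv Q Ans n k ` set_pmf M))"
    proof (rule log_le_cancel_iff[THEN iffD2, OF b])
      show "0 < real (card (ans_rv Q Ans n 0 ` set_pmf M))" using fin set_pmf_not_empty[of M] by (simp add: card_gt_0_iff)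
      have "card (ans_rv Q Ans n 0 ` set_pmf M) \<le> card (\<Union>k. ans_rv Q Ans n k ` set_pmf M)"
        by (rule card_mono) (use fin in auto)
      then show "real (card (ans_rv Q Ans n 0 ` set_pmf M)) \<le> real (card (\<Union>k. ans_rv Q Ans n k ` set_pmf M))" by simp
      then show "0 < real (card (\<Union>k. ans_rv Q Ans n k ` set_pmf M))" using fin set_pmf_not_empty[of M] by (simp add: card_gt_0_iff)
    qed
    finally show ?thesis .
  qed
  have "download pF pR Q Ans = log b (card (\<Union>k. ans_rv Q Ans 0 k ` set_pmf M)) + log b (card (\<Union>k. ans_rv Q Ans 1 k ` set_pmf M))"
    unfolding download_def b_def M_def by (simp add: UNIV2)
  then have "2 \<le> download pF pR Q Ans" using dl[of 0] dl[of 1] HA0 HA1 unfolding A0_def A1_def by linarith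
  then show ?thesis using cr cr2 by simp
qed



definition vec3 :: "'a \<Rightarrow> 'a \<Rightarrow> 'a \<Rightarrow> 3 \<Rightarrow> 'a" where
  "vec3 a b c = (\<lambda>j. if j = 0 then a else if j = 1 then b else c)"
definition uvec :: "nat \<Rightarrow> 3 \<Rightarrow> 'f::field" where
  "uvec f = (if f = 0 then vec3 0 0 0 else if f = 1 then vec3 1 1 0 else if f = 2 then vec3 1 0 1 else vec3 0 1 1)"
definition tvec :: "nat \<Rightarrow> 3 \<Rightarrow> 'f::field" where
  "tvec g = (if g = 0 then vec3 1 1 1 else if g = 1 then vec3 0 0 1 else if g = 2 then vec3 0 1 0 else vec3 1 0 0)"
definition sig :: "3 \<Rightarrow> nat \<Rightarrow> nat" where
  "sig k f = (if k = 0 then 3 - f else if k = 1 then (if f < 2 then f + 2 else f - 2)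
              else (if even f then f + 1 else f - 1))"
definition qs :: "2 \<Rightarrow> 3 \<Rightarrow> nat \<Rightarrow> nat" where
  "qs n k f = (if n = 0 then f else sig k f)"
definition dot3 :: "(3 \<Rightarrow> 'f::field) \<Rightarrow> (3 \<Rightarrow> 'f) \<Rightarrow> 'f" where
  "dot3 v w = v 0 * w 0 + v 1 * w 1 + v 2 * w 2"
definition ansf :: "2 \<Rightarrow> nat \<Rightarrow> (3 \<Rightarrow> 'f::{finite,field}) \<Rightarrow> nat \<Rightarrow> nat" where
  "ansf n q w r = to_nat (dot3 (if n = 0 then uvec q else tvec q) w + from_nat r)"
definition pFs :: "nat pmf" where "pFs = pmf_of_set {0,1,2,3}"
definition pRs :: "'f::finite itself \<Rightarrow> nat pmf" where
  "pRs t = map_pmf (to_nat :: 'f \<Rightarrow> nat) (pmf_of_set UNIV)"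

lemma F4: "f \<in> {0,1,2,3::nat} \<Longrightarrow> f = 0 \<or> f = 1 \<or> f = 2 \<or> f = 3" by auto

lemma recov_dot:
  fixes w :: "3 \<Rightarrow> 'f::field"
  assumes "f \<in> {0,1,2,3}"
  shows "w k = (uvec f k - tvec (sig k f) k) * (dot3 (uvec f) w - dot3 (tvec (sig k f)) w)"
  using ex3[of k] F4[OF assms]
  by (auto simp: uvec_def tvec_def sig_def vec3_def dot3_def algebra_simps)

lemma sig_perm: "sig k ` {0,1,2,3} = {0,1,2,3}"
  using ex3[of k] by (auto simp: sig_def)

lemma sig_inj: "inj_on (sig k) {0,1,2,3}"
  using ex3[of k] by (auto simp: sig_def inj_on_def)

lemma qs_eq: "n \<noteq> 0 \<Longrightarrow> qs n k = sig k" by (simp add: qs_def fun_eq_iff)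

lemma qs_perm: "qs n k ` {0,1,2,3} = {0,1,2,3}"
proof (cases "n = 0")
  case True then show ?thesis by (simp add: qs_def)
next
  case False show ?thesis by (subst qs_eq[OF False]) (rule sig_perm)
qed

lemma qs_inj: "inj_on (qs n k) {0,1,2,3}"
proof (cases "n = 0")
  case True then show ?thesis by (simp add: qs_def)
next
  case False show ?thesis by (subst qs_eq[OF False]) (rule sig_inj)
qed


lemma set_pFs: "set_pmf pFs = {0,1,2,3}" by (simp add: pFs_def)
lemma set_pRs: "set_pmf (pRs TYPE('f::finite)) = range (to_nat :: 'f \<Rightarrow> nat)" by (simp add: pRs_def)
lemma fin_pFs: "finite (set_pmf pFs)" by (simp add: set_pFs)
lemma fin_pRs: "finite (set_pmf (pRs TYPE('f::finite)))" by (simp add: set_pRs)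

lemma S_mem:
  assumes "(\<omega> :: ('f::finite) sample) \<in> set_pmf (joint pFs (pRs TYPE('f)))"
  shows "fst (snd \<omega>) \<in> {0,1,2,3}" "snd (snd \<omega>) \<in> range (to_nat :: 'f \<Rightarrow> nat)"
  using assms by (auto simp: set_joint set_pFs set_pRs)

lemma recov_w:
  fixes w :: "3 \<Rightarrow> 'f::{finite,field}"
  assumes "f \<in> {0,1,2,3}"
  shows "w k = (uvec f k - tvec (sig k f) k) * ((from_nat (ansf 0 (qs 0 k f) w r) :: 'f) - from_nat (ansf 1 (qs 1 k f) w r))"
proof -
  have "(from_nat (ansf 0 (qs 0 k f) w r) :: 'f) - from_nat (ansf 1 (qs 1 k f) w r) = dot3 (uvec f) w - dot3 (tvec (sig k f)) w"
    by (simp add: ansf_def qs_def)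
  then show ?thesis using recov_dot[OF assms, of w k] by simp
qed

lemma recov_r:
  fixes w :: "3 \<Rightarrow> 'f::{finite,field}"
  assumes "r \<in> range (to_nat :: 'f \<Rightarrow> nat)"
  shows "r = to_nat ((from_nat (ansf 0 (qs 0 k f) w r) :: 'f) - dot3 (uvec f) w)"
proof -
  obtain c :: 'f where c: "r = to_nat c" using assms by auto
  show ?thesis by (simp add: ansf_def qs_def c)
qed

lemma det_w:
  fixes x y :: "('f::{finite,field}) sample"
  assumes "fst (snd x) \<in> {0,1,2,3}" "fst (snd x) = fst (snd y)"
    "ans_rv qs ansf 0 k x = ans_rv qs ansf 0 k y" "ans_rv qs ansf 1 k x = ans_rv qs ansf 1 k y"
  shows "fst x k = fst y k"
proof -
  have ay: "fst (snd y) \<in> {0,1,2,3}" using assms(1,2) by simp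
  show ?thesis
    using recov_w[OF assms(1), of "fst x" k "snd (snd x)"] recov_w[OF ay, of "fst y" k "snd (snd y)"] assms(2-4)
    by (simp add: rv_simps)
qed

lemma P_rel:
  "cond_ent (qbase TYPE('f::{finite,field})) (joint pFs (pRs TYPE('f))) (msg_rv k)
     (\<lambda>\<omega>. (user_rv \<omega>, \<lambda>n. ans_rv qs (ansf :: 2 \<Rightarrow> nat \<Rightarrow> (3 \<Rightarrow> 'f) \<Rightarrow> nat \<Rightarrow> nat) n k \<omega>)) = 0"
proof -
  have "rv_ent (qbase TYPE('f)) (joint pFs (pRs TYPE('f))) (\<lambda>\<omega>. (msg_rv k \<omega>, (user_rv \<omega>, \<lambda>n. ans_rv qs (ansf :: 2 \<Rightarrow> nat \<Rightarrow> (3 \<Rightarrow> 'f) \<Rightarrow> nat \<Rightarrow> nat) n k \<omega>)))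
     = rv_ent (qbase TYPE('f)) (joint pFs (pRs TYPE('f))) (\<lambda>\<omega>. (user_rv \<omega>, \<lambda>n. ans_rv qs (ansf :: 2 \<Rightarrow> nat \<Rightarrow> (3 \<Rightarrow> 'f) \<Rightarrow> nat \<Rightarrow> nat) n k \<omega>))"
  proof (rule ent_eq_part)
    fix x y :: "'f sample"
    assume x: "x \<in> set_pmf (joint pFs (pRs TYPE('f)))"
    show "((msg_rv k x, user_rv x, \<lambda>n. ans_rv qs ansf n k x) = (msg_rv k y, user_rv y, \<lambda>n. ans_rv qs ansf n k y)) =
          ((user_rv x, \<lambda>n. ans_rv qs ansf n k x) = (user_rv y, \<lambda>n. ans_rv qs ansf n k y))"
    proof
      assume "(user_rv x, \<lambda>n. ans_rv qs ansf n k x) = (user_rv y, \<lambda>n. ans_rv qs (ansf :: 2 \<Rightarrow> nat \<Rightarrow> (3 \<Rightarrow> 'f) \<Rightarrow> nat \<Rightarrow> nat) n k y)"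
      then have e: "fst (snd x) = fst (snd y)" "ans_rv qs ansf 0 k x = ans_rv qs ansf 0 k y" "ans_rv qs ansf 1 k x = ans_rv qs ansf 1 k y"
        by (auto simp: rv_simps(2) fun_eq_iff)
      have "fst x k = fst y k" by (rule det_w[OF S_mem(1)[OF x] e])
      then show "(msg_rv k x, user_rv x, \<lambda>n. ans_rv qs ansf n k x) = (msg_rv k y, user_rv y, \<lambda>n. ans_rv qs ansf n k y)"
        using \<open>(user_rv x, _) = _\<close> by (simp add: rv_simps(1))
    qed simp
  qed
  then show ?thesis unfolding cond_ent_def by simp
qed

lemma perm_inv:
  fixes h :: "nat \<Rightarrow> nat"
  assumes "h ` {0,1,2,3} = {0,1,2,3}" "inj_on h {0,1,2,3}"
  shows "map_pmf (\<lambda>\<omega>. (h (fst (snd \<omega>)), fst \<omega>, snd (snd \<omega>))) (joint pFs pR :: ('f::finite) sample pmf)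
       = map_pmf (\<lambda>\<omega>. (fst (snd \<omega>), fst \<omega>, snd (snd \<omega>))) (joint pFs pR :: 'f sample pmf)"
proof -
  have mh: "map_pmf h pFs = pFs" unfolding pFs_def using assms by (simp add: map_pmf_of_set_inj)
  have e1: "(\<lambda>\<omega>::'f sample. (h (fst (snd \<omega>)), fst \<omega>, snd (snd \<omega>))) =
      (\<lambda>\<omega>. (fst (snd \<omega>), fst \<omega>, snd (snd \<omega>))) \<circ> (\<lambda>(a, b). ((\<lambda>w. w) a, (\<lambda>(c, d). (h c, (\<lambda>r. r) d)) b))"
    by (auto simp: fun_eq_iff)
  have "map_pmf (\<lambda>(a, b). ((\<lambda>w. w) a, (\<lambda>(c, d). (h c, (\<lambda>r. r) d)) b)) (joint pFs pR :: 'f sample pmf) = joint pFs pR"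
    unfolding joint_def map_pair by (simp add: map_pair mh)
  then show ?thesis unfolding e1 map_pmf_compose comp_apply by simp
qed

lemma P_up:
  "map_pmf (\<lambda>\<omega>. (query_rv qs n k \<omega>, ans_rv qs (ansf :: 2 \<Rightarrow> nat \<Rightarrow> (3 \<Rightarrow> 'f::{finite,field}) \<Rightarrow> nat \<Rightarrow> nat) n k \<omega>, fst \<omega>, snd (snd \<omega>))) (joint pFs pR)
   = map_pmf (\<lambda>\<omega>. (fst (snd \<omega>), ansf n (fst (snd \<omega>)) (fst \<omega>) (snd (snd \<omega>)), fst \<omega>, snd (snd \<omega>))) (joint pFs pR)"
proof -
  have e: "(\<lambda>\<omega>. (query_rv qs n k \<omega>, ans_rv qs (ansf :: 2 \<Rightarrow> nat \<Rightarrow> (3 \<Rightarrow> 'f::{finite,field}) \<Rightarrow> nat \<Rightarrow> nat) n k \<omega>, fst \<omega>, snd (snd \<omega>)))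
     = (\<lambda>(q, w, r). (q, ansf n q w r, w, r)) \<circ> (\<lambda>\<omega>. (qs n k (fst (snd \<omega>)), fst \<omega>, snd (snd \<omega>)))"
    by (auto simp: fun_eq_iff rv_simps)
  have e2: "(\<lambda>\<omega>::'f sample. (fst (snd \<omega>), ansf n (fst (snd \<omega>)) (fst \<omega>) (snd (snd \<omega>)), fst \<omega>, snd (snd \<omega>)))
     = (\<lambda>(q, w, r). (q, ansf n q w r, w, r)) \<circ> (\<lambda>\<omega>. (fst (snd \<omega>), fst \<omega>, snd (snd \<omega>)))"
    by (auto simp: fun_eq_iff)
  show ?thesis unfolding e e2 map_pmf_compose comp_apply perm_inv[OF qs_perm qs_inj] ..
qed


lemma ent_le_one:
  assumes fin: "finite (set_pmf M)"
  shows "rv_ent (qbase TYPE('f::{finite,field})) M (X :: _ \<Rightarrow> 'f) \<le> 1"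
proof -
  let ?b = "qbase TYPE('f)"
  have b: "1 < ?b" by (rule b_gt1)
  have "rv_ent ?b M X \<le> log ?b (card (X ` set_pmf M))" by (rule ent_le_card[OF b fin])
  also have "\<dots> \<le> log ?b (CARD('f))"
  proof (rule log_le_cancel_iff[THEN iffD2, OF b])
    show "0 < real (card (X ` set_pmf M))" using fin set_pmf_not_empty[of M] by (simp add: card_gt_0_iff)
    show "0 < real CARD('f)" by simp
    show "real (card (X ` set_pmf M)) \<le> real CARD('f)" by (simp add: card_mono)
  qed
  also have "\<dots> = 1" using b by (simp add: qbase_def)
  finally show ?thesis .
qed

lemma ent_uniform_id:
  "rv_ent (qbase TYPE('f::{finite,field})) (pmf_of_set (UNIV :: (3 \<Rightarrow> 'f) set)) (\<lambda>w. w) = 3"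
proof -
  let ?b = "qbase TYPE('f)"
  have b: "1 < ?b" by (rule b_gt1)
  have "rv_ent ?b (pmf_of_set (UNIV :: (3 \<Rightarrow> 'f) set)) (\<lambda>w. w) = log ?b (CARD(3 \<Rightarrow> 'f))"
    unfolding rv_ent_def by (simp add: pmf_ent_uniform)
  also have "\<dots> = 3" using b by (simp add: card_fun qbase_def log_nat_power)
  finally show ?thesis .
qed

lemma pRs_ent: "pmf_ent (qbase TYPE('f::{finite,field})) (pRs TYPE('f)) = 1"
proof -
  have b: "1 < qbase TYPE('f)" by (rule b_gt1)
  have "pmf_ent (qbase TYPE('f)) (pRs TYPE('f)) = pmf_ent (qbase TYPE('f)) (pmf_of_set (UNIV :: 'f set))"
    unfolding pRs_def by (rule pmf_ent_inj) simp
  also have "\<dots> = log (qbase TYPE('f)) CARD('f)" by (simp add: pmf_ent_uniform)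
  also have "\<dots> = 1" using b by (simp add: qbase_def)
  finally show ?thesis .
qed

lemma O_le2:
  assumes fin: "finite (set_pmf M)"
  shows "rv_ent (qbase TYPE('f::{finite,field})) M (others_rv k :: 'f sample \<Rightarrow> _) \<le> 2"
proof -
  let ?b = "qbase TYPE('f)"
  let ?H = "rv_ent ?b M"
  have b: "1 < ?b" by (rule b_gt1)
  have le1: "?H (\<lambda>\<omega>::'f sample. fst \<omega> j) \<le> 1" for j by (rule ent_le_one[OF fin])
  have "k = 0 \<or> k = 1 \<or> k = 2" by (rule ex3)
  then show ?thesis
  proof (elim disjE)
    assume k: "k = 0"
    have "?H (others_rv k) \<le> ?H (\<lambda>\<omega>::'f sample. fst \<omega> 1) + ?H (\<lambda>\<omega>. fst \<omega> 2)"
      unfolding k by (rule ent_subadd_gen[OF b fin]) (auto simp: rv_simps fun3_eq)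
    then show ?thesis using le1[of 1] le1[of 2] by linarith
  next
    assume k: "k = 1"
    have "?H (others_rv k) \<le> ?H (\<lambda>\<omega>::'f sample. fst \<omega> 0) + ?H (\<lambda>\<omega>. fst \<omega> 2)"
      unfolding k by (rule ent_subadd_gen[OF b fin]) (auto simp: rv_simps fun3_eq)
    then show ?thesis using le1[of 0] le1[of 2] by linarith
  next
    assume k: "k = 2"
    have "?H (others_rv k) \<le> ?H (\<lambda>\<omega>::'f sample. fst \<omega> 0) + ?H (\<lambda>\<omega>. fst \<omega> 1)"
      unfolding k by (rule ent_subadd_gen[OF b fin]) (auto simp: rv_simps fun3_eq)
    then show ?thesis using le1[of 0] le1[of 1] by linarith
  qed
qed

lemma ans_le1:
  assumes fin: "finite (set_pmf M)"
  shows "rv_ent (qbase TYPE('f::{finite,field})) M (ans_rv qs (ansf :: 2 \<Rightarrow> nat \<Rightarrow> (3 \<Rightarrow> 'f) \<Rightarrow> nat \<Rightarrow> nat) n k) \<le> 1"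
proof -
  define G where "G = (\<lambda>\<omega>::'f sample. dot3 (if n = 0 then uvec (qs n k (fst (snd \<omega>))) else tvec (qs n k (fst (snd \<omega>)))) (fst \<omega>) + (from_nat (snd (snd \<omega>)) :: 'f))"
  have "ans_rv qs (ansf :: 2 \<Rightarrow> nat \<Rightarrow> (3 \<Rightarrow> 'f) \<Rightarrow> nat \<Rightarrow> nat) n k = (\<lambda>\<omega>. to_nat (G \<omega>))"
    by (simp add: fun_eq_iff rv_simps ansf_def G_def)
  then have "rv_ent (qbase TYPE('f)) M (ans_rv qs (ansf :: 2 \<Rightarrow> nat \<Rightarrow> (3 \<Rightarrow> 'f) \<Rightarrow> nat \<Rightarrow> nat) n k) = rv_ent (qbase TYPE('f)) M G"
    by (simp add: ent_inj[of to_nat])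
  also have "\<dots> \<le> 1" by (rule ent_le_one[OF fin])
  finally show ?thesis .
qed

lemma P_dp:
  "mut_info (qbase TYPE('f::{finite,field})) (joint pFs (pRs TYPE('f))) (others_rv k)
     (\<lambda>\<omega>. (user_rv \<omega>, \<lambda>n. ans_rv qs (ansf :: 2 \<Rightarrow> nat \<Rightarrow> (3 \<Rightarrow> 'f) \<Rightarrow> nat \<Rightarrow> nat) n k \<omega>)) = 0"
proof -
  define b where "b = qbase TYPE('f)"
  define M where "M = (joint pFs (pRs TYPE('f)) :: 'f sample pmf)"
  have b: "1 < b" unfolding b_def by (rule b_gt1)
  have fin: "finite (set_pmf M)" unfolding M_def by (simp add: fin_joint fin_pFs fin_pRs)
  define Y where "Y = (\<lambda>\<omega>::'f sample. (user_rv \<omega>, \<lambda>n. ans_rv qs (ansf :: 2 \<Rightarrow> nat \<Rightarrow> (3 \<Rightarrow> 'f) \<Rightarrow> nat \<Rightarrow> nat) n k \<omega>))"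
  define Ov where "Ov = (others_rv k :: 'f sample \<Rightarrow> _)"
  let ?H = "rv_ent b M"
  have nn: "?H (\<lambda>\<omega>. (Ov \<omega>, Y \<omega>)) \<le> ?H Ov + ?H Y" by (rule ent_subadd[OF b fin])
  have a: "?H (\<lambda>\<omega>. (Ov \<omega>, Y \<omega>)) = ?H (\<lambda>\<omega>. (fst \<omega>, fst (snd \<omega>), snd (snd \<omega>)))"
  proof (rule ent_eq_part)
    fix x y :: "'f sample"
    assume x: "x \<in> set_pmf M" and y: "y \<in> set_pmf M"
    show "((Ov x, Y x) = (Ov y, Y y)) = ((fst x, fst (snd x), snd (snd x)) = (fst y, fst (snd y), snd (snd y)))"
    proof
      assume h: "(Ov x, Y x) = (Ov y, Y y)"
      then have e: "fst (snd x) = fst (snd y)" "ans_rv qs ansf 0 k x = ans_rv qs ansf 0 k y" "ans_rv qs (ansf :: 2 \<Rightarrow> nat \<Rightarrow> (3 \<Rightarrow> 'f) \<Rightarrow> nat \<Rightarrow> nat) 1 k x = ans_rv qs ansf 1 k y"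
        and eo: "others_rv k x = others_rv k y"
        by (auto simp: Y_def Ov_def rv_simps(2) fun_eq_iff)
      have wk: "fst x k = fst y k" by (rule det_w[OF S_mem(1)[OF x[unfolded M_def]] e])
      have w: "fst x = fst y" by (rule others_det2[OF eo wk])
      have rx: "snd (snd x) = to_nat ((from_nat (ansf 0 (qs 0 k (fst (snd x))) (fst x) (snd (snd x))) :: 'f) - dot3 (uvec (fst (snd x))) (fst x))"
        by (rule recov_r[OF S_mem(2)[OF x[unfolded M_def]]])
      have ry: "snd (snd y) = to_nat ((from_nat (ansf 0 (qs 0 k (fst (snd y))) (fst y) (snd (snd y))) :: 'f) - dot3 (uvec (fst (snd y))) (fst y))"
        by (rule recov_r[OF S_mem(2)[OF y[unfolded M_def]]])
      have "snd (snd x) = snd (snd y)" using rx ry e(1,2) w by (simp add: rv_simps)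
      then show "(fst x, fst (snd x), snd (snd x)) = (fst y, fst (snd y), snd (snd y))" using w e(1) by simp
    qed (auto simp: Y_def Ov_def rv_simps)
  qed
  have i1: "?H (\<lambda>\<omega>. (fst \<omega>, fst (snd \<omega>), snd (snd \<omega>))) = rv_ent b (pmf_of_set (UNIV::(3\<Rightarrow>'f) set)) (\<lambda>w. w) + rv_ent b pFs (\<lambda>f. f) + rv_ent b (pRs TYPE('f)) (\<lambda>r. r)"
    using ent3[OF fin_pFs fin_pRs, of b "\<lambda>w::3\<Rightarrow>'f. w" "\<lambda>f. f" "\<lambda>r. r"] unfolding M_def by simp
  have i2: "?H (\<lambda>\<omega>. ((), fst (snd \<omega>), ())) = rv_ent b pFs (\<lambda>f. f)"
    using ent3[OF fin_pFs fin_pRs, of b "\<lambda>w::3\<Rightarrow>'f. ()" "\<lambda>f. f" "\<lambda>r. ()"] unfolding M_def by (simp add: ent_const)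
  have hF: "?H user_rv = ?H (\<lambda>\<omega>. ((), fst (snd \<omega>), ()))" by (rule ent_eq_part) (auto simp: rv_simps)
  have u3: "rv_ent b (pmf_of_set (UNIV::(3\<Rightarrow>'f) set)) (\<lambda>w. w) = 3" unfolding b_def by (rule ent_uniform_id)
  have r1: "rv_ent b (pRs TYPE('f)) (\<lambda>r. r) = 1" unfolding b_def rv_ent_def using pRs_ent by simp
  have o2: "?H Ov \<le> 2" unfolding b_def Ov_def by (rule O_le2[OF fin])
  have y1: "?H Y \<le> ?H user_rv + ?H (\<lambda>\<omega>. (ans_rv qs (ansf :: 2 \<Rightarrow> nat \<Rightarrow> (3 \<Rightarrow> 'f) \<Rightarrow> nat \<Rightarrow> nat) 0 k \<omega>, ans_rv qs (ansf :: 2 \<Rightarrow> nat \<Rightarrow> (3 \<Rightarrow> 'f) \<Rightarrow> nat \<Rightarrow> nat) 1 k \<omega>))"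
    by (rule ent_subadd_gen[OF b fin]) (auto simp: Y_def fun2_eq)
  have y2: "?H (\<lambda>\<omega>. (ans_rv qs (ansf :: 2 \<Rightarrow> nat \<Rightarrow> (3 \<Rightarrow> 'f) \<Rightarrow> nat \<Rightarrow> nat) 0 k \<omega>, ans_rv qs (ansf :: 2 \<Rightarrow> nat \<Rightarrow> (3 \<Rightarrow> 'f) \<Rightarrow> nat \<Rightarrow> nat) 1 k \<omega>))
     \<le> ?H (ans_rv qs (ansf :: 2 \<Rightarrow> nat \<Rightarrow> (3 \<Rightarrow> 'f) \<Rightarrow> nat \<Rightarrow> nat) 0 k) + ?H (ans_rv qs (ansf :: 2 \<Rightarrow> nat \<Rightarrow> (3 \<Rightarrow> 'f) \<Rightarrow> nat \<Rightarrow> nat) 1 k)"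
    by (rule ent_subadd[OF b fin])
  have a0: "?H (ans_rv qs (ansf :: 2 \<Rightarrow> nat \<Rightarrow> (3 \<Rightarrow> 'f) \<Rightarrow> nat \<Rightarrow> nat) 0 k) \<le> 1" unfolding b_def by (rule ans_le1[OF fin])
  have a1: "?H (ans_rv qs (ansf :: 2 \<Rightarrow> nat \<Rightarrow> (3 \<Rightarrow> 'f) \<Rightarrow> nat \<Rightarrow> nat) 1 k) \<le> 1" unfolding b_def by (rule ans_le1[OF fin])
  have "?H Ov + ?H Y - ?H (\<lambda>\<omega>. (Ov \<omega>, Y \<omega>)) = 0"
    using nn a i1 i2 hF u3 r1 o2 y1 y2 a0 a1 by linarith
  then show ?thesis unfolding mut_info_def b_def M_def Ov_def Y_def .
qed


lemma log2_4: "log 2 (4::real) = 2"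
proof -
  have "log 2 ((2::real) ^ 2) = 2" by (subst log_nat_power) simp_all
  then show ?thesis by simp
qed

lemma achieve:
  "spir_scheme pFs (pRs TYPE('f::{finite,field})) qs (ansf :: 2 \<Rightarrow> nat \<Rightarrow> (3 \<Rightarrow> 'f) \<Rightarrow> nat \<Rightarrow> nat)
   \<and> upload pFs qs = 4
   \<and> upload pFs qs + download pFs (pRs TYPE('f)) qs (ansf :: 2 \<Rightarrow> nat \<Rightarrow> (3 \<Rightarrow> 'f) \<Rightarrow> nat \<Rightarrow> nat) = 6
   \<and> cr_amount TYPE('f) (pRs TYPE('f)) = 1"
proof -
  have sch: "spir_scheme pFs (pRs TYPE('f)) qs (ansf :: 2 \<Rightarrow> nat \<Rightarrow> (3 \<Rightarrow> 'f) \<Rightarrow> nat \<Rightarrow> nat)"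
    unfolding spir_scheme_def
    by (intro conjI allI fin_pFs fin_pRs P_rel P_dp) (simp only: P_up)
  have U: "(\<Union>k. qs n k ` set_pmf pFs) = {0,1,2,3}" for n
    unfolding set_pFs qs_perm by simp
  have up: "upload pFs qs = 4"
    unfolding upload_def U by (simp add: UNIV2 log2_4)
  have D: "(\<Union>k. ans_rv qs (ansf :: 2 \<Rightarrow> nat \<Rightarrow> (3 \<Rightarrow> 'f) \<Rightarrow> nat \<Rightarrow> nat) n k ` set_pmf (joint pFs (pRs TYPE('f)))) = range (to_nat :: 'f \<Rightarrow> nat)" for n
  proof
    show "(\<Union>k. ans_rv qs (ansf :: 2 \<Rightarrow> nat \<Rightarrow> (3 \<Rightarrow> 'f) \<Rightarrow> nat \<Rightarrow> nat) n k ` set_pmf (joint pFs (pRs TYPE('f)))) \<subseteq> range (to_nat :: 'f \<Rightarrow> nat)"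
      by (auto simp: rv_simps ansf_def)
    show "range (to_nat :: 'f \<Rightarrow> nat) \<subseteq> (\<Union>k. ans_rv qs (ansf :: 2 \<Rightarrow> nat \<Rightarrow> (3 \<Rightarrow> 'f) \<Rightarrow> nat \<Rightarrow> nat) n k ` set_pmf (joint pFs (pRs TYPE('f))))"
    proof
      fix x assume "x \<in> range (to_nat :: 'f \<Rightarrow> nat)"
      then obtain c :: 'f where c: "x = to_nat c" by auto
      have m: "((\<lambda>_. 0) :: 3 \<Rightarrow> 'f, 0, to_nat c) \<in> set_pmf (joint pFs (pRs TYPE('f)))"
        by (simp add: set_joint set_pFs set_pRs)
      have "ans_rv qs (ansf :: 2 \<Rightarrow> nat \<Rightarrow> (3 \<Rightarrow> 'f) \<Rightarrow> nat \<Rightarrow> nat) n 0 ((\<lambda>_. 0) :: 3 \<Rightarrow> 'f, 0, to_nat c) = x"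
        by (simp add: rv_simps ansf_def dot3_def c)
      then show "x \<in> (\<Union>k. ans_rv qs (ansf :: 2 \<Rightarrow> nat \<Rightarrow> (3 \<Rightarrow> 'f) \<Rightarrow> nat \<Rightarrow> nat) n k ` set_pmf (joint pFs (pRs TYPE('f))))"
        using m by force
    qed
  qed
  have cardr: "card (range (to_nat :: 'f \<Rightarrow> nat)) = CARD('f)"
    by (simp add: card_image)
  have b: "1 < qbase TYPE('f)" by (rule b_gt1)
  have dl: "download pFs (pRs TYPE('f)) qs (ansf :: 2 \<Rightarrow> nat \<Rightarrow> (3 \<Rightarrow> 'f) \<Rightarrow> nat \<Rightarrow> nat) = 2"
    unfolding download_def D cardr using b by (simp add: UNIV2 qbase_def)
  have cr: "cr_amount TYPE('f) (pRs TYPE('f)) = 1"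
    unfolding cr_amount_def by (rule pRs_ent)
  show ?thesis using sch up dl cr by simp
qed

theorem corollary2:
  fixes fld :: "'f::{finite, field} itself"
  shows "(\<forall>pF pR Q (Ans :: 2 \<Rightarrow> nat \<Rightarrow> (3 \<Rightarrow> 'f) \<Rightarrow> nat \<Rightarrow> nat).
            spir_scheme pF pR Q Ans \<and> upload pF Q = 4 \<longrightarrow>
              upload pF Q + download pF pR Q Ans \<ge> 6 \<and> cr_amount TYPE('f) pR \<ge> 1)
       \<and> (\<exists>pF pR Q (Ans :: 2 \<Rightarrow> nat \<Rightarrow> (3 \<Rightarrow> 'f) \<Rightarrow> nat \<Rightarrow> nat).
            spir_scheme pF pR Q Ans \<and> upload pF Q = 4 \<and>
            upload pF Q + download pF pR Q Ans = 6 \<and> cr_amount TYPE('f) pR = 1)"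
proof
  show "\<forall>pF pR Q (Ans :: 2 \<Rightarrow> nat \<Rightarrow> (3 \<Rightarrow> 'f) \<Rightarrow> nat \<Rightarrow> nat).
            spir_scheme pF pR Q Ans \<and> upload pF Q = 4 \<longrightarrow>
              upload pF Q + download pF pR Q Ans \<ge> 6 \<and> cr_amount TYPE('f) pR \<ge> 1"
  proof (intro allI impI)
    fix pF pR Q and Ans :: "2 \<Rightarrow> nat \<Rightarrow> (3 \<Rightarrow> 'f) \<Rightarrow> nat \<Rightarrow> nat"
    assume h: "spir_scheme pF pR Q Ans \<and> upload pF Q = 4"
    then have "2 \<le> download pF pR Q Ans \<and> 1 \<le> cr_amount TYPE('f) pR" by (intro converse) simp
    then show "upload pF Q + download pF pR Q Ans \<ge> 6 \<and> cr_amount TYPE('f) pR \<ge> 1" using h by simp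
  qed
  show "\<exists>pF pR Q (Ans :: 2 \<Rightarrow> nat \<Rightarrow> (3 \<Rightarrow> 'f) \<Rightarrow> nat \<Rightarrow> nat).
            spir_scheme pF pR Q Ans \<and> upload pF Q = 4 \<and>
            upload pF Q + download pF pR Q Ans = 6 \<and> cr_amount TYPE('f) pR = 1"
    using achieve by blast
qed

end
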